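(* Let $b>1$, let $P_n=\mathcal{E}(1)^{\otimes n}$, and for $\theta\in(0,1)$ let $Q_n$ be the law under which $X_1,\dots,X_n$ are independent, $X_1,\dots,X_{n-1}\sim\mathcal{E}(\theta)$ and $X_n\sim\mathcal{E}(1)$ (partial exponential tilting). Let $M_n=\frac1n\sum_{i=1}^nX_i$ and $B=[b,\infty)$. Then $(M_n,W_n)$ satisfies under $Q_n$ the LDP with good rate function $$J_Q(m,w)=m-w-\log\frac{w-\log\theta}{1-\theta}-1\quad\text{if } \frac{w-\log\theta}{1-\theta}\ge0 \text{ and } m-\frac{w-\log\theta}{1-\theta}\ge0,$$ and $J_Q(m,w)=+\infty$ otherwise; its unique zero is $(m^*,w^* )=(1/\theta,\,(1-\theta)/\theta+\log\theta)$. Moreover, $(Q_n)$ is asymptotically efficient for estimating $P_n(M_n\ge b)$ if and only if $\theta=1/b$ and $b\le2$; in the case $\theta=1/b$, the left derivative of $I_Q^B$ at $w^*$ equals $-1-\frac{1}{b-1}$.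
   Context: $\mathcal{E}(\theta)$ denotes the exponential distribution with density $\theta e^{-\theta x}$ on $x\ge0$ (mean $1/\theta$); $\mathcal{E}(1)^{\otimes n}$ is the law of $n$ i.i.d. $\mathcal{E}(1)$ variables $X_1,\dots,X_n$. $L_n=dP_n/dQ_n$, $W_n=-\frac1n\log L_n$. $I_Q^B(w)=\inf_{m\in\bar B}J_Q(m,w)$. $(Q_n)$ is asymptotically efficient if $R_Q(B):=\lim_n-\frac1n\log\mathbb{E}_Q[L_n^2\mathbf{1}_{M_n\in B}]$ exists and equals $2\lim_n-\frac1n\log P_n(M_n\in B)$. *)

theory Defs
  imports "HOL-Probability.Probability"
begin

definition eln :: "ennreal \<Rightarrow> ereal" where
  "eln x = (if x = 0 then - \<infinity> else if x = \<top> then \<infinity> else ereal (ln (enn2real x)))"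

definition good_rate_function :: "('a::topological_space \<Rightarrow> ereal) \<Rightarrow> bool" where
  "good_rate_function I \<longleftrightarrow>
     (\<forall>x. 0 \<le> I x) \<and> (\<forall>c::real. closed {x. I x \<le> ereal c}) \<and> (\<forall>c::real. compact {x. I x \<le> ereal c})"

definition LDP :: "(nat \<Rightarrow> 'a::topological_space measure) \<Rightarrow> ('a \<Rightarrow> ereal) \<Rightarrow> bool" where
  "LDP \<mu> I \<longleftrightarrow> good_rate_function I
     \<and> (\<forall>F. closed F \<longrightarrow>
          limsup (\<lambda>n. eln (emeasure (\<mu> n) F) / ereal (real n)) \<le> - (INF x\<in>F. I x))
     \<and> (\<forall>G. open G \<longrightarrow>
          - (INF x\<in>G. I x) \<le> liminf (\<lambda>n. eln (emeasure (\<mu> n) G) / ereal (real n)))"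

definition Pn :: "nat \<Rightarrow> (nat \<Rightarrow> real) measure" where
  "Pn n = PiM {..<n} (\<lambda>i. density lborel (\<lambda>x. ennreal (exponential_density 1 x)))"

text \<open>Q_n: coordinates 0..n-2 are E(\<theta>), coordinate n-1 (= X_n) is E(1).\<close>
definition Qn :: "real \<Rightarrow> nat \<Rightarrow> (nat \<Rightarrow> real) measure" where
  "Qn \<theta> n = PiM {..<n} (\<lambda>i. density lborel
       (\<lambda>x. ennreal (exponential_density (if i < n - 1 then \<theta> else 1) x)))"

definition Mn :: "nat \<Rightarrow> (nat \<Rightarrow> real) \<Rightarrow> real" where
  "Mn n x = (\<Sum>i<n. x i) / real n"

definition Ln :: "real \<Rightarrow> nat \<Rightarrow> (nat \<Rightarrow> real) \<Rightarrow> ennreal" where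
  "Ln \<theta> n = RN_deriv (Qn \<theta> n) (Pn n)"

definition Wn :: "real \<Rightarrow> nat \<Rightarrow> (nat \<Rightarrow> real) \<Rightarrow> real" where
  "Wn \<theta> n x = - ln (enn2real (Ln \<theta> n x)) / real n"

definition lawMW :: "real \<Rightarrow> nat \<Rightarrow> (real \<times> real) measure" where
  "lawMW \<theta> n = distr (Qn \<theta> n) borel (\<lambda>x. (Mn n x, Wn \<theta> n x))"

definition JQ :: "real \<Rightarrow> real \<times> real \<Rightarrow> ereal" where
  "JQ \<theta> p = (let m = fst p; w = snd p; u = (w - ln \<theta>) / (1 - \<theta>) in
     if 0 < u \<and> 0 \<le> m - u then ereal (m - w - ln u - 1) else \<infinity>)"

definition IQB :: "real \<Rightarrow> real \<Rightarrow> real \<Rightarrow> ereal" where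
  "IQB \<theta> b w = (INF m\<in>{b..}. JQ \<theta> (m, w))"

definition asymp_efficient :: "real \<Rightarrow> real \<Rightarrow> bool" where
  "asymp_efficient \<theta> b \<longleftrightarrow> (\<exists>r s.
     ((\<lambda>n. - eln (\<integral>\<^sup>+ x. (Ln \<theta> n x)\<^sup>2 * indicator {x. Mn n x \<in> {b..}} x \<partial>Qn \<theta> n)
              / ereal (real n)) \<longlongrightarrow> r) sequentially
   \<and> ((\<lambda>n. - eln (emeasure (Pn n) {x\<in>space (Pn n). Mn n x \<in> {b..}}) / ereal (real n))
              \<longlongrightarrow> s) sequentially
   \<and> r = 2 * s)"

end

theory Submission
  imports Defs "HOL-Real_Asymp.Real_Asymp"
begin


lemma ln_strict: assumes "0 < (x::real)" "x \<noteq> 1" shows "ln x < x - 1"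
proof -
  have s: "0 < sqrt x" using assms by simp
  have "ln x = 2 * ln (sqrt x)" using assms by (simp add: ln_sqrt)
  also have "\<dots> \<le> 2 * (sqrt x - 1)" using ln_le_minus_one[OF s] by simp
  also have "\<dots> < x - 1"
  proof -
    have "sqrt x \<noteq> 1" using assms by simp
    hence "0 < (sqrt x - 1)^2" by simp
    moreover have "(sqrt x)^2 = x" using assms by simp
    ultimately show ?thesis by (simp add: power2_eq_square algebra_simps)
  qed
  finally show ?thesis .
qed

lemma ln_half: assumes "0 < (x::real)" shows "ln x \<le> x / 2"
proof -
  have "ln (x/2) \<le> x/2 - 1" using ln_le_minus_one assms by simp
  moreover have "ln (x/2) = ln x - ln 2" using assms by (simp add: ln_div)
  moreover have "ln 2 < (1::real)" using ln_2_less_1 .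
  ultimately show ?thesis by linarith
qed

definition Kr :: "real \<Rightarrow> real \<times> real \<Rightarrow> real" where
  "Kr \<theta> p = \<theta> * fst p - 1 - ln (\<theta> * fst p) + snd p"

definition Psi :: "real \<Rightarrow> real \<times> real \<Rightarrow> real \<times> real" where
  "Psi \<theta> p = (fst p + snd p, ln \<theta> + (1 - \<theta>) * fst p)"

lemma Kr_nonneg: assumes "0 < \<theta>" "0 < fst p" "0 \<le> snd p" shows "0 \<le> Kr \<theta> p"
  using ln_le_minus_one[of "\<theta> * fst p"] assms by (simp add: Kr_def)

lemma JQ_Psi:
  assumes "0 < \<theta>" "\<theta> < 1" "0 < fst p" "0 \<le> snd p"
  shows "JQ \<theta> (Psi \<theta> p) = ereal (Kr \<theta> p)"
proof -
  have u: "(snd (Psi \<theta> p) - ln \<theta>) / (1 - \<theta>) = fst p" using assms by (simp add: Psi_def)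
  have "JQ \<theta> (Psi \<theta> p) = (if 0 < fst p \<and> 0 \<le> fst (Psi \<theta> p) - fst p
        then ereal (fst (Psi \<theta> p) - snd (Psi \<theta> p) - ln (fst p) - 1) else \<infinity>)"
    unfolding JQ_def Let_def u by simp
  also have "\<dots> = ereal (Kr \<theta> p)" using assms
    by (simp add: Psi_def Kr_def ln_mult algebra_simps)
  finally show ?thesis .
qed

lemma JQ_finite_Psi:
  assumes "0 < \<theta>" "\<theta> < 1" "JQ \<theta> q \<noteq> \<infinity>"
  shows "\<exists>p. 0 < fst p \<and> 0 \<le> snd p \<and> q = Psi \<theta> p"
proof -
  obtain m w where q: "q = (m, w)" by fastforce
  define u where "u = (w - ln \<theta>) / (1 - \<theta>)"
  have c: "0 < u \<and> 0 \<le> m - u" using assms unfolding JQ_def q Let_def u_def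
    by (auto split: if_splits)
  have w: "w = ln \<theta> + (1 - \<theta>) * u" using assms by (simp add: u_def)
  show ?thesis
    by (rule exI[of _ "(u, m - u)"]) (use c w in \<open>simp add: q Psi_def\<close>)
qed

lemma JQ_nonneg: assumes "0 < \<theta>" "\<theta> < 1" shows "0 \<le> JQ \<theta> q"
proof (cases "JQ \<theta> q = \<infinity>")
  case False
  then obtain p where p: "0 < fst p" "0 \<le> snd p" "q = Psi \<theta> p"
    using JQ_finite_Psi assms by blast
  then show ?thesis using JQ_Psi[OF assms p(1,2)] Kr_nonneg[of \<theta> p] assms by simp
qed simp

lemma Kr_sub_bounds:
  assumes "0 < \<theta>" "0 < fst p" "0 \<le> snd p" "Kr \<theta> p \<le> c"
  shows "exp (-c-1) / \<theta> \<le> fst p" "fst p \<le> 2 * (c + 1) / \<theta>" "snd p \<le> c + 1"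
proof -
  let ?x = "\<theta> * fst p"
  have x: "0 < ?x" using assms by simp
  have l1: "ln ?x \<le> ?x - 1" using ln_le_minus_one[OF x] .
  have l2: "ln ?x \<le> ?x / 2" using ln_half[OF x] .
  have K: "?x - 1 - ln ?x + snd p \<le> c" using assms(4) by (simp add: Kr_def)
  have "- c - 1 \<le> ln ?x" using K x assms(3) by linarith
  hence "exp (-c-1) \<le> ?x" using x by (metis exp_le_cancel_iff exp_ln)
  thus "exp (-c-1) / \<theta> \<le> fst p" using assms by (simp add: field_simps)
  have "?x / 2 \<le> c + 1" using K l2 assms(3) by linarith
  hence "?x \<le> 2 * (c+1)" by (simp add: field_simps)
  thus "fst p \<le> 2 * (c + 1) / \<theta>" using assms by (simp add: field_simps)
  show "snd p \<le> c + 1" using K l1 by linarith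
qed

lemma compact_Kr_sub:
  assumes "0 < \<theta>"
  shows "compact {p. 0 < fst p \<and> 0 \<le> snd p \<and> Kr \<theta> p \<le> c}" (is "compact ?S")
proof -
  define e where "e = exp (-c-1) / \<theta>"
  have e: "0 < e" using assms by (simp add: e_def)
  have eq: "?S = {p. e \<le> fst p} \<inter> {p. 0 \<le> snd p} \<inter>
      {p. \<theta> * fst p - 1 - ln (\<theta> * max (fst p) e) + snd p \<le> c}"
  proof (intro set_eqI iffI)
    fix p assume "p \<in> ?S"
    then have "e \<le> fst p" using Kr_sub_bounds(1)[OF assms] by (auto simp: e_def)
    then show "p \<in> {p. e \<le> fst p} \<inter> {p. 0 \<le> snd p} \<inter>
      {p. \<theta> * fst p - 1 - ln (\<theta> * max (fst p) e) + snd p \<le> c}"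
      using \<open>p \<in> ?S\<close> by (auto simp: Kr_def max_def)
  next
    fix p assume "p \<in> {p. e \<le> fst p} \<inter> {p. 0 \<le> snd p} \<inter>
      {p. \<theta> * fst p - 1 - ln (\<theta> * max (fst p) e) + snd p \<le> c}"
    then show "p \<in> ?S" using e by (auto simp: Kr_def max_def)
  qed
  have cl: "closed ?S"
    unfolding eq
    apply (intro closed_Int closed_Collect_le continuous_intros)
    using e assms by auto
  have "?S \<subseteq> cbox (0,0) (2 * (c + 1) / \<theta>, c + 1)"
    using Kr_sub_bounds[OF assms] by (auto simp: cbox_Pair_eq less_eq_prod_def mem_box)
  then have "bounded ?S" using bounded_cbox bounded_subset by blast
  then show ?thesis using cl compact_eq_bounded_closed by blast
qed

lemma continuous_Psi: "continuous_on S (Psi \<theta>)"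
  unfolding Psi_def by (intro continuous_intros)

lemma JQ_sub:
  assumes "0 < \<theta>" "\<theta> < 1"
  shows "{q. JQ \<theta> q \<le> ereal c} = Psi \<theta> ` {p. 0 < fst p \<and> 0 \<le> snd p \<and> Kr \<theta> p \<le> c}"
proof (intro set_eqI iffI)
  fix q assume "q \<in> {q. JQ \<theta> q \<le> ereal c}"
  then have "JQ \<theta> q \<noteq> \<infinity>" by auto
  then obtain p where p: "0 < fst p" "0 \<le> snd p" "q = Psi \<theta> p" using JQ_finite_Psi assms by blast
  then show "q \<in> Psi \<theta> ` {p. 0 < fst p \<and> 0 \<le> snd p \<and> Kr \<theta> p \<le> c}"
    using JQ_Psi[OF assms p(1,2)] \<open>q \<in> _\<close> by auto
next
  fix q assume "q \<in> Psi \<theta> ` {p. 0 < fst p \<and> 0 \<le> snd p \<and> Kr \<theta> p \<le> c}"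
  then show "q \<in> {q. JQ \<theta> q \<le> ereal c}" using JQ_Psi[OF assms] by auto
qed

lemma good_JQ: assumes "0 < \<theta>" "\<theta> < 1" shows "good_rate_function (JQ \<theta>)"
proof -
  have c: "compact {x. JQ \<theta> x \<le> ereal c}" for c
    unfolding JQ_sub[OF assms]
    by (intro compact_continuous_image continuous_Psi compact_Kr_sub) (use assms in auto)
  show ?thesis unfolding good_rate_function_def
    using JQ_nonneg[OF assms] c compact_imp_closed by blast
qed

lemma JQ_zero:
  assumes "0 < \<theta>" "\<theta> < 1"
  shows "JQ \<theta> (m, w) = 0 \<longleftrightarrow> (m, w) = (1 / \<theta>, (1 - \<theta>) / \<theta> + ln \<theta>)"
proof
  assume z: "JQ \<theta> (m, w) = 0"
  then obtain p where p: "0 < fst p" "0 \<le> snd p" "(m, w) = Psi \<theta> p"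
    using JQ_finite_Psi[OF assms, of "(m,w)"] by auto
  have K: "Kr \<theta> p = 0" using JQ_Psi[OF assms p(1,2)] p(3) z by simp
  let ?x = "\<theta> * fst p"
  have x: "0 < ?x" using assms p by simp
  have "?x = 1"
  proof (rule ccontr)
    assume "?x \<noteq> 1"
    then have "ln ?x < ?x - 1" using ln_strict x by blast
    then show False using K p(2) by (simp add: Kr_def)
  qed
  moreover have "snd p = 0" using K ln_le_minus_one[OF x] p(2) by (simp add: Kr_def)
  ultimately have "m = fst p" "w = ln \<theta> + (1 - \<theta>) * fst p" "fst p = 1 / \<theta>"
    using p(3) assms by (auto simp: Psi_def field_simps)
  then show "(m, w) = (1 / \<theta>, (1 - \<theta>) / \<theta> + ln \<theta>)"
    by (simp add: field_simps)
next
  assume e: "(m, w) = (1 / \<theta>, (1 - \<theta>) / \<theta> + ln \<theta>)"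
  have "(m, w) = Psi \<theta> (1/\<theta>, 0)" using e assms by (simp add: Psi_def field_simps)
  moreover have "JQ \<theta> (Psi \<theta> (1/\<theta>, 0)) = 0"
    using JQ_Psi[OF assms, of "(1/\<theta>, 0)"] assms by (simp add: Kr_def)
  ultimately show "JQ \<theta> (m, w) = 0" by simp
qed


lemma xlnx: "0 < (x::real) \<Longrightarrow> 0 \<le> x - 1 - ln x"
  using ln_le_minus_one[of x] by simp

lemma xlnx_eq: assumes "0 < (x::real)" shows "x - 1 - ln x = 0 \<longleftrightarrow> x = 1"
proof
  assume h: "x - 1 - ln x = 0"
  show "x = 1"
  proof (rule ccontr)
    assume "x \<noteq> 1"
    then have "ln x < x - 1" using ln_strict assms by blast
    then show False using h by linarith
  qed
qed simp

definition sval :: "real \<Rightarrow> real" where "sval b = b - 1 - ln b"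
definition rval :: "real \<Rightarrow> real \<Rightarrow> real" where
  "rval \<theta> b = (if 1 \<le> b * (1 - \<theta>) then ln \<theta> + ln (1 - \<theta>) + b else ln \<theta> + (2 - \<theta>) * b - 1 - ln b)"
definition K2 :: "real \<Rightarrow> real \<times> real \<Rightarrow> real" where
  "K2 \<theta> p = Kr \<theta> p + 2 * (1 - \<theta>) * fst p + 2 * ln \<theta>"

lemma K2_eq: "0 < \<theta> \<Longrightarrow> 0 < a \<Longrightarrow> K2 \<theta> (a, t) = (2 - \<theta>) * a - 1 + ln \<theta> - ln a + t"
  by (simp add: K2_def Kr_def ln_mult algebra_simps)

lemma sval_le:
  assumes "1 < b" "0 < a" "0 \<le> t" "b \<le> a + t"
  shows "sval b \<le> Kr 1 (a, t)"
proof (cases "b \<le> a")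
  case True
  have "ln (a / b) \<le> a / b - 1" using ln_le_minus_one assms by simp
  hence "ln a - ln b \<le> a / b - 1" using assms by (simp add: ln_div)
  moreover have "a / b - 1 \<le> a - b"
  proof -
    have "(a - b) * (1 - 1/b) \<ge> 0" using True assms by simp
    thus ?thesis using assms by (simp add: field_simps)
  qed
  ultimately show ?thesis using assms by (simp add: sval_def Kr_def)
next
  case False
  have "ln a \<le> ln b" using False assms by simp
  moreover have "Kr 1 (a, t) = a - 1 - ln a + t" by (simp add: Kr_def)
  ultimately show ?thesis using assms unfolding sval_def by linarith
qed

lemma rval_le:
  assumes "0 < \<theta>" "\<theta> < 1" "1 < b" "0 < a" "0 \<le> t" "b \<le> a + t"
  shows "rval \<theta> b \<le> K2 \<theta> (a, t)"
proof (cases "1 \<le> b * (1 - \<theta>)")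
  case True
  have "0 \<le> (1 - \<theta>) * a - 1 - ln ((1 - \<theta>) * a)" using xlnx assms by simp
  hence "1 + ln (1 - \<theta>) \<le> (1 - \<theta>) * a - ln a" using assms by (simp add: ln_mult)
  then show ?thesis using True assms by (simp add: rval_def K2_eq algebra_simps)
next
  case False
  show ?thesis
  proof (cases "b \<le> a")
    case True
    have "ln (a / b) \<le> a / b - 1" using ln_le_minus_one assms by simp
    hence "ln a - ln b \<le> a / b - 1" using assms by (simp add: ln_div)
    moreover have "a / b - 1 \<le> (2 - \<theta>) * (a - b)"
    proof -
      have "1/b < 1" using assms by simp
      hence "0 \<le> (2 - \<theta>) - 1/b" using assms by linarith
      hence "(a - b) * ((2 - \<theta>) - 1/b) \<ge> 0" using True by simp
      moreover have "a / b - 1 = (a - b) * (1/b)" using assms by (simp add: field_simps)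
      ultimately show ?thesis by (simp add: algebra_simps)
    qed
    ultimately show ?thesis using False assms by (simp add: rval_def K2_eq algebra_simps)
  next
    case lt: False
    have "ln (b / a) \<ge> 1 - a / b"
    proof -
      have "ln (a / b) \<le> a / b - 1" using ln_le_minus_one assms by simp
      moreover have "ln (b / a) = - ln (a / b)" using assms by (simp add: ln_div)
      ultimately show ?thesis by linarith
    qed
    hence "ln b - ln a \<ge> 1 - a / b" using assms by (simp add: ln_div)
    moreover have "1 - a / b \<ge> (1 - \<theta>) * (b - a)"
    proof -
      have "b * (1 - \<theta>) < 1" using False by simp
      hence "1/b - (1 - \<theta>) > 0" using assms by (simp add: field_simps)
      hence "(b - a) * (1/b - (1 - \<theta>)) \<ge> 0" using lt by simp
      thus ?thesis using assms by (simp add: field_simps)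
    qed
    ultimately show ?thesis using False assms by (simp add: rval_def K2_eq algebra_simps)
  qed
qed

lemma rval_pt:
  assumes "0 < \<theta>" "\<theta> < 1" "1 < b"
  shows "\<exists>a t. 0 < a \<and> 0 \<le> t \<and> b \<le> a + t \<and> K2 \<theta> (a, t) = rval \<theta> b"
proof (cases "1 \<le> b * (1 - \<theta>)")
  case True
  let ?a = "1 / (1 - \<theta>)"
  have "b \<ge> ?a" using True assms by (simp add: field_simps)
  moreover have "K2 \<theta> (?a, b - ?a) = rval \<theta> b"
  proof -
    have a0: "0 < ?a" using assms by simp
    have l: "ln ?a = - ln (1 - \<theta>)" using assms by (simp add: ln_div)
    have g: "\<forall>x::real. (2 - \<theta>) * x - x = (1 - \<theta>) * x" by (simp add: algebra_simps)
    have "(2 - \<theta>) * ?a - ?a = (1 - \<theta>) * ?a" using g by blast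
    also have "\<dots> = 1" using assms by simp
    finally have q: "(2 - \<theta>) * ?a - ?a = 1" .
    have r: "rval \<theta> b = ln \<theta> + ln (1 - \<theta>) + b" using True by (simp add: rval_def)
    show ?thesis unfolding K2_eq[OF assms(1) a0] l r using q by linarith
  qed
  ultimately show ?thesis using assms by (intro exI[of _ ?a] exI[of _ "b - ?a"]) auto
next
  case False
  have "K2 \<theta> (b, 0) = rval \<theta> b" using False assms by (simp add: K2_eq rval_def)
  then show ?thesis using assms by (intro exI[of _ b] exI[of _ 0]) auto
qed

lemma sval_pt: "1 < b \<Longrightarrow> Kr 1 (b, 0) = sval b"
  by (simp add: Kr_def sval_def)

lemma rs_iff:
  assumes "0 < \<theta>" "\<theta> < 1" "1 < b"
  shows "rval \<theta> b = 2 * sval b \<longleftrightarrow> (\<theta> = 1 / b \<and> b \<le> 2)"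
proof (cases "1 \<le> b * (1 - \<theta>)")
  case True
  have x: "0 < \<theta> * b" and y: "0 < (1 - \<theta>) * b" using assms by auto
  have l1: "ln (\<theta> * b) = ln \<theta> + ln b" using assms by (simp add: ln_mult)
  have l2: "ln ((1 - \<theta>) * b) = ln (1 - \<theta>) + ln b" using assms by (simp add: ln_mult)
  have r: "rval \<theta> b = ln \<theta> + ln (1 - \<theta>) + b" using True by (simp add: rval_def)
  have sb: "\<theta> * b + (1 - \<theta>) * b = b" by (simp add: algebra_simps)
  have e: "rval \<theta> b - 2 * sval b = - ((\<theta> * b - 1 - ln (\<theta> * b)) + ((1 - \<theta>) * b - 1 - ln ((1 - \<theta>) * b)))"
    unfolding r sval_def l1 l2 by (simp add: algebra_simps)
  show ?thesis
  proof
    assume "rval \<theta> b = 2 * sval b"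
    hence "(\<theta> * b - 1 - ln (\<theta> * b)) + ((1 - \<theta>) * b - 1 - ln ((1 - \<theta>) * b)) = 0" using e by simp
    hence "\<theta> * b - 1 - ln (\<theta> * b) = 0" "(1 - \<theta>) * b - 1 - ln ((1 - \<theta>) * b) = 0"
      using xlnx[OF x] xlnx[OF y] by linarith+
    hence "\<theta> * b = 1" "(1 - \<theta>) * b = 1" using xlnx_eq x y by blast+
    thus "\<theta> = 1 / b \<and> b \<le> 2" using assms by (auto simp: field_simps)
  next
    assume h: "\<theta> = 1 / b \<and> b \<le> 2"
    hence "b = 2" using True assms by (auto simp: field_simps)
    hence "\<theta> * b = 1" "(1 - \<theta>) * b = 1" using h by auto
    thus "rval \<theta> b = 2 * sval b" using e by simp
  qed
next
  case False
  have x: "0 < \<theta> * b" using assms by auto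
  have l1: "ln (\<theta> * b) = ln \<theta> + ln b" using assms by (simp add: ln_mult)
  have r: "rval \<theta> b = ln \<theta> + (2 - \<theta>) * b - 1 - ln b" using False by (simp add: rval_def)
  have e: "rval \<theta> b - 2 * sval b = - (\<theta> * b - 1 - ln (\<theta> * b))"
    unfolding r sval_def l1 by (simp add: algebra_simps)
  show ?thesis
  proof
    assume "rval \<theta> b = 2 * sval b"
    hence "\<theta> * b = 1" using e xlnx_eq[OF x] by simp
    thus "\<theta> = 1 / b \<and> b \<le> 2" using False assms by (auto simp: field_simps)
  next
    assume h: "\<theta> = 1 / b \<and> b \<le> 2"
    hence "\<theta> * b = 1" using assms by auto
    thus "rval \<theta> b = 2 * sval b" using e by simp
  qed
qed

lemma IQB_eq:
  assumes "1 < b" "\<theta> = 1 / b" "ln \<theta> < w" "w \<le> (1 - \<theta>) / \<theta> + ln \<theta>"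
  shows "IQB \<theta> b w = ereal (b - w - ln ((w - ln \<theta>) / (1 - \<theta>)) - 1)"
proof -
  define u where "u = (w - ln \<theta>) / (1 - \<theta>)"
  have th: "0 < \<theta>" "\<theta> < 1" using assms by auto
  have u0: "0 < u" using assms th by (simp add: u_def)
  have ub: "u \<le> b"
  proof -
    have "w - ln \<theta> \<le> (1 - \<theta>) / \<theta>" using assms by simp
    hence "u \<le> 1 / \<theta>" using th by (simp add: u_def field_simps)
    thus ?thesis using assms by simp
  qed
  have J: "JQ \<theta> (m, w) = ereal (m - w - ln u - 1)" if "b \<le> m" for m
  proof -
    have "JQ \<theta> (m, w) = (if 0 < u \<and> 0 \<le> m - u then ereal (m - w - ln u - 1) else \<infinity>)"
      unfolding JQ_def Let_def u_def by simp
    then show ?thesis using that u0 ub by auto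
  qed
  show ?thesis unfolding IQB_def u_def[symmetric]
  proof (rule antisym)
    show "(INF m\<in>{b..}. JQ \<theta> (m, w)) \<le> ereal (b - w - ln u - 1)"
      using J[of b] by (intro INF_lower2[of b]) auto
    show "ereal (b - w - ln u - 1) \<le> (INF m\<in>{b..}. JQ \<theta> (m, w))"
      using J by (intro INF_greatest) auto
  qed
qed

lemma IQB_deriv:
  assumes "1 < b" "\<theta> = 1 / b"
  shows "((\<lambda>w. real_of_ereal (IQB \<theta> b w)) has_real_derivative (- 1 - 1 / (b - 1)))
           (at ((1 - \<theta>) / \<theta> + ln \<theta>) within {..(1 - \<theta>) / \<theta> + ln \<theta>})"
proof -
  have th: "0 < \<theta>" "\<theta> < 1" using assms by auto
  define w0 where "w0 = (1 - \<theta>) / \<theta> + ln \<theta>"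
  have d0: "w0 - ln \<theta> = b - 1" using assms(1) unfolding w0_def assms(2) by (simp add: field_simps)
  define f where "f w = b - w - ln ((w - ln \<theta>) / (1 - \<theta>)) - 1" for w
  have "(f has_real_derivative (- 1 - (1 / (1 - \<theta>)) / ((w0 - ln \<theta>) / (1 - \<theta>)))) (at w0)"
    unfolding f_def using th d0 assms
    by (auto intro!: derivative_eq_intros)
  moreover have "- 1 - (1 / (1 - \<theta>)) / ((w0 - ln \<theta>) / (1 - \<theta>)) = - 1 - 1 / (b - 1)"
    using th d0 by (simp add: field_simps)
  ultimately have D: "(f has_real_derivative (- 1 - 1 / (b - 1))) (at w0 within {..w0})"
    using has_field_derivative_at_within by metis
  show ?thesis unfolding w0_def[symmetric]
  proof (rule has_field_derivative_transform_within[OF D, of "b - 1"])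
    show "0 < b - 1" using assms by simp
    show "w0 \<in> {..w0}" by simp
    fix x assume x: "x \<in> {..w0}" "dist x w0 < b - 1"
    have "ln \<theta> < x" using x d0 by (auto simp: dist_real_def)
    then show "f x = real_of_ereal (IQB \<theta> b x)"
      using IQB_eq[OF assms, of x] x by (simp add: f_def w0_def)
  qed
qed


definition gd :: "real \<Rightarrow> nat \<Rightarrow> real \<times> real \<Rightarrow> real" where
  "gd \<theta> n p = erlang_density (n - 2) (real n * \<theta>) (fst p) * erlang_density 0 (real n) (snd p)"

definition h2 :: "real \<Rightarrow> real \<times> real \<Rightarrow> real" where
  "h2 \<theta> p = (if 0 < fst p \<and> 0 \<le> snd p then 4 * \<theta> * exp (- 2 * \<theta> * fst p - 2 * snd p) else 0)"

definition Cn :: "nat \<Rightarrow> real" where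
  "Cn n = real n ^ n / (4 * exp (real n - 2) * fact (n - 2))"

lemma Cn_pos: "0 < n \<Longrightarrow> 0 < Cn n"
  by (simp add: Cn_def)

lemma aux_alg: "((x::real) * \<theta>) ^ (k + 1) * a ^ k * E1 / f * (x * E2) = x ^ (k + 2) * \<theta> * (\<theta> * a) ^ k / f * (E1 * E2)"
  by (simp add: power_mult_distrib algebra_simps)

lemma gd_factor:
  assumes "3 \<le> n" "0 < \<theta>"
  shows "gd \<theta> n p = Cn n * exp (- (real n - 2) * Kr \<theta> p) * h2 \<theta> p"
proof -
  obtain k where n: "n = k + 2" "1 \<le> k" using assms by (metis add.commute le_add_diff_inverse2 le_add1 le_trans numeral_le_iff numerals(1) one_add_one semiring_norm(68) add_le_cancel_left numeral_Bit1 numeral_One)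
  obtain a t where p: "p = (a, t)" by fastforce
  show ?thesis
  proof (cases "0 < a \<and> 0 \<le> t")
    case True
    have e1: "exp (- real k * Kr \<theta> (a, t)) = exp (real k) * exp (- real k * \<theta> * a - real k * t) * (\<theta> * a) ^ k"
    proof -
      have "- real k * Kr \<theta> (a, t) = real k + (- real k * \<theta> * a - real k * t) + real k * ln (\<theta> * a)"
        by (simp add: Kr_def algebra_simps)
      then have "exp (- real k * Kr \<theta> (a, t)) = exp (real k) * exp (- real k * \<theta> * a - real k * t) * exp (real k * ln (\<theta> * a))"
        by (simp add: exp_add)
      also have "exp (real k * ln (\<theta> * a)) = (\<theta> * a) ^ k"
        using True assms by (simp add: exp_of_nat_mult)
      finally show ?thesis .
    qed
    have e2: "exp (real k) * exp (- real k * \<theta> * a - real k * t) * exp (- 2 * \<theta> * a - 2 * t) =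
        exp (real k) * (exp (- (real k + 2) * \<theta> * a) * exp (- (real k + 2) * t))"
      by (simp add: exp_add[symmetric] algebra_simps)
    have L: "gd \<theta> n p = ((real k + 2) * \<theta>) ^ (k + 1) * a ^ k * exp (- (real k + 2) * \<theta> * a) / fact k
        * ((real k + 2) * exp (- (real k + 2) * t))"
      using True by (simp add: gd_def p n erlang_density_def algebra_simps)
    have rn: "real n - 2 = real k" using n by simp
    have "Cn n * exp (- (real n - 2) * Kr \<theta> p) * h2 \<theta> p = Cn n * (exp (real k) * exp (- real k * \<theta> * a - real k * t) * (\<theta> * a) ^ k) * h2 \<theta> (a, t)"
      by (simp only: rn p e1)
    also have "\<dots> = (real k + 2) ^ (k + 2) / (4 * exp (real k) * fact k) * (exp (real k) * exp (- real k * \<theta> * a - real k * t) * (\<theta> * a) ^ k)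
         * (4 * \<theta> * exp (- 2 * \<theta> * a - 2 * t))"
      using True by (simp add: Cn_def n h2_def add.commute)
    also have "\<dots> = (real k + 2) ^ (k + 2) * \<theta> * (\<theta> * a) ^ k / fact k * (exp (real k) * exp (- real k * \<theta> * a - real k * t) * exp (- 2 * \<theta> * a - 2 * t)) / exp (real k)"
      by (simp add: field_simps)
    also have "\<dots> = (real k + 2) ^ (k + 2) * \<theta> * (\<theta> * a) ^ k / fact k * (exp (- (real k + 2) * \<theta> * a) * exp (- (real k + 2) * t))"
      unfolding e2 by simp
    finally have R: "Cn n * exp (- (real n - 2) * Kr \<theta> p) * h2 \<theta> p = (real k + 2) ^ (k + 2) * \<theta> * (\<theta> * a) ^ k / fact k * (exp (- (real k + 2) * \<theta> * a) * exp (- (real k + 2) * t))" .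
    show ?thesis by (simp only: L R aux_alg)
  next
    case False
    then have "gd \<theta> n p = 0" using n p by (auto simp: gd_def erlang_density_def)
    moreover have "h2 \<theta> p = 0" using False p by (auto simp: h2_def)
    ultimately show ?thesis by simp
  qed
qed


lemma erl_int: "0 < l \<Longrightarrow> (\<integral>\<^sup>+x. ennreal (erlang_density k l x) \<partial>lborel) = 1"
proof -
  assume l: "0 < l"
  interpret prob_space "density lborel (\<lambda>x. ennreal (erlang_density k l x))"
    using prob_space_erlang_density[OF l] .
  have "emeasure (density lborel (\<lambda>x. ennreal (erlang_density k l x))) UNIV = 1"
    using emeasure_space_1 by simp
  then show ?thesis by (simp add: emeasure_density)
qed

lemma pair_int:
  fixes f g :: "real \<Rightarrow> real"
  assumes [measurable]: "f \<in> borel_measurable borel" "g \<in> borel_measurable borel"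
    and nn: "\<And>x. 0 \<le> f x" "\<And>x. 0 \<le> g x"
  shows "(\<integral>\<^sup>+p. ennreal (f (fst p) * g (snd p)) \<partial>lborel) =
    (\<integral>\<^sup>+x. ennreal (f x) \<partial>lborel) * (\<integral>\<^sup>+y. ennreal (g y) \<partial>lborel)"
proof -
  have "(\<integral>\<^sup>+p. ennreal (f (fst p) * g (snd p)) \<partial>lborel) =
     (\<integral>\<^sup>+p. ennreal (f (fst p) * g (snd p)) \<partial>(lborel \<Otimes>\<^sub>M lborel))"
    by (simp add: lborel_prod)
  also have "\<dots> = (\<integral>\<^sup>+x. \<integral>\<^sup>+y. ennreal (f x * g y) \<partial>lborel \<partial>lborel)"
    by (subst lborel.nn_integral_fst[symmetric]) auto
  also have "\<dots> = (\<integral>\<^sup>+x. ennreal (f x) * \<integral>\<^sup>+y. ennreal (g y) \<partial>lborel \<partial>lborel)"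
    using nn by (simp add: ennreal_mult nn_integral_cmult)
  also have "\<dots> = (\<integral>\<^sup>+x. ennreal (f x) \<partial>lborel) * (\<integral>\<^sup>+y. ennreal (g y) \<partial>lborel)"
    by (simp add: nn_integral_multc)
  finally show ?thesis .
qed

lemma gd_int: assumes "0 < \<theta>" "0 < n" shows "(\<integral>\<^sup>+p. ennreal (gd \<theta> n p) \<partial>lborel) = 1"
  unfolding gd_def using assms
  by (subst pair_int) (auto simp: erl_int)

lemma h2_le: assumes "0 < \<theta>" shows "h2 \<theta> p \<le> erlang_density 0 (2 * \<theta>) (fst p) * erlang_density 0 2 (snd p)"
  using assms by (auto simp: h2_def erlang_density_def exp_add[symmetric] algebra_simps)

lemma h2_nonneg: "0 < \<theta> \<Longrightarrow> 0 \<le> h2 \<theta> p"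
  by (simp add: h2_def)

lemma h2_meas[measurable]: "h2 \<theta> \<in> borel_measurable borel"
  unfolding h2_def borel_prod[symmetric] by measurable

lemma h2_int: assumes "0 < \<theta>" shows "(\<integral>\<^sup>+p. ennreal (h2 \<theta> p) \<partial>lborel) \<le> 1"
proof -
  have "(\<integral>\<^sup>+p. ennreal (h2 \<theta> p) \<partial>lborel) \<le>
     (\<integral>\<^sup>+p. ennreal (erlang_density 0 (2 * \<theta>) (fst p) * erlang_density 0 2 (snd p)) \<partial>lborel)"
    using h2_le[OF assms] by (intro nn_integral_mono) (simp add: ennreal_leI)
  also have "\<dots> = 1" using assms by (subst pair_int) (auto simp: erl_int)
  finally show ?thesis .
qed

lemma Cn_ge1: assumes "3 \<le> n" shows "1 \<le> Cn n"
proof -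
  have "1 = (\<integral>\<^sup>+p. ennreal (gd 1 n p) \<partial>lborel)" using gd_int[of 1 n] assms by simp
  also have "\<dots> = (\<integral>\<^sup>+p. ennreal (Cn n * exp (- (real n - 2) * Kr 1 p) * h2 1 p) \<partial>lborel)"
    using gd_factor[OF assms, of 1] by simp
  also have "\<dots> \<le> (\<integral>\<^sup>+p. ennreal (Cn n) * ennreal (h2 1 p) \<partial>lborel)"
  proof (intro nn_integral_mono)
    fix p
    show "ennreal (Cn n * exp (- (real n - 2) * Kr 1 p) * h2 1 p) \<le> ennreal (Cn n) * ennreal (h2 1 p)"
    proof (cases "0 < fst p \<and> 0 \<le> snd p")
      case True
      have "0 \<le> Kr 1 p" using Kr_nonneg[of 1 p] True by simp
      moreover have "0 \<le> real n - 2" using assms by simp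
      ultimately have "0 \<le> (real n - 2) * Kr 1 p" by (rule mult_nonneg_nonneg[rotated])
      then have "- (real n - 2) * Kr 1 p \<le> 0" by linarith
      then have "exp (- (real n - 2) * Kr 1 p) \<le> 1" by simp
      then have "Cn n * exp (- (real n - 2) * Kr 1 p) * h2 1 p \<le> Cn n * h2 1 p"
        using Cn_pos[of n] assms h2_nonneg[of 1 p]
        by (intro mult_right_mono) (auto intro: mult_left_le)
      moreover have "ennreal (Cn n) * ennreal (h2 1 p) = ennreal (Cn n * h2 1 p)"
        using Cn_pos[of n] assms h2_nonneg[of 1 p] by (simp add: ennreal_mult)
      ultimately show ?thesis by (simp add: ennreal_leI)
    next
      case False
      then have "h2 1 p = 0" by (auto simp: h2_def)
      then show ?thesis by simp
    qed
  qed
  also have "\<dots> = ennreal (Cn n) * (\<integral>\<^sup>+p. ennreal (h2 1 p) \<partial>lborel)"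
    by (simp add: nn_integral_cmult)
  also have "\<dots> \<le> ennreal (Cn n) * 1"
    using h2_int[of 1] by (intro mult_left_mono) auto
  finally show ?thesis by (simp add: ennreal_le_iff[symmetric])
qed


lemma fact_exp_bound: "real k ^ k \<le> exp (real k) * fact k"
proof -
  let ?f = "\<lambda>j. real k ^ j /\<^sub>R fact j"
  have s: "?f sums exp (real k)" by (rule exp_converges)
  have "sum ?f {k} \<le> suminf ?f"
    using s by (intro sum_le_suminf) (auto simp: sums_iff)
  then have "real k ^ k / fact k \<le> exp (real k)" using s by (simp add: sums_iff divide_inverse mult.commute)
  then show ?thesis by (simp add: field_simps)
qed

lemma lnCn_bounds:
  assumes "3 \<le> n"
  shows "0 \<le> ln (Cn n)" "ln (Cn n) \<le> real n * ln (real n) - ln 4 - (real n - 2) * ln (real n - 2)"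
proof -
  show "0 \<le> ln (Cn n)" using Cn_ge1[OF assms] by simp
  define k where "k = n - 2"
  have n: "n = k + 2" "1 \<le> k" using assms by (auto simp: k_def)
  have kpos: "0 < real k ^ k" using n by simp
  have "Cn n \<le> real n ^ n / (4 * real k ^ k)"
    unfolding Cn_def using fact_exp_bound[of k] kpos n
    by (intro divide_left_mono) (auto intro!: mult_pos_pos)
  then have "ln (Cn n) \<le> ln (real n ^ n / (4 * real k ^ k))"
    using Cn_pos[of n] n by simp
  also have "\<dots> = ln (real n ^ n) - ln (4 * real k ^ k)"
    using n kpos by (simp add: ln_div)
  also have "ln (real n ^ n) = real n * ln (real n)"
    by (rule ln_realpow)
  also have "ln (4 * real k ^ k) = ln 4 + real k * ln (real k)"
    using n kpos by (simp add: ln_mult ln_realpow)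
  also have "real n * ln (real n) - (ln 4 + real k * ln (real k)) = real n * ln (real n) - ln 4 - real k * ln (real k)"
    by simp
  finally show "ln (Cn n) \<le> real n * ln (real n) - ln 4 - (real n - 2) * ln (real n - 2)"
    using n by simp
qed

lemma lnCn_lim: "((\<lambda>n. ln (Cn n) / real n) \<longlongrightarrow> 0) sequentially"
proof (rule tendsto_sandwich[of "\<lambda>n. 0" _ _ "\<lambda>n. (real n * ln (real n) - ln 4 - (real n - 2) * ln (real n - 2)) / real n"])
  show "eventually (\<lambda>n. 0 \<le> ln (Cn n) / real n) sequentially"
    using eventually_ge_at_top[of 3] by eventually_elim (use lnCn_bounds in simp)
  show "eventually (\<lambda>n. ln (Cn n) / real n \<le> (real n * ln (real n) - ln 4 - (real n - 2) * ln (real n - 2)) / real n) sequentially"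
    using eventually_ge_at_top[of 3] by eventually_elim (use lnCn_bounds in \<open>auto intro: divide_right_mono\<close>)
  show "((\<lambda>n. (real n * ln (real n) - ln 4 - (real n - 2) * ln (real n - 2)) / real n) \<longlongrightarrow> 0) sequentially"
    by real_asymp
qed simp


lemma laplace_upper:
  fixes K h :: "real \<times> real \<Rightarrow> real"
  assumes th: "0 < \<theta>" and C: "0 \<le> C" and k: "0 \<le> k"
    and h: "\<And>p. 0 \<le> h p" "\<And>p. h p \<le> h2 \<theta> p"
    and KE: "\<And>p. p \<in> E \<Longrightarrow> h p \<noteq> 0 \<Longrightarrow> c \<le> K p"
  shows "(\<integral>\<^sup>+p. ennreal (C * exp (- k * K p) * h p) * indicator E p \<partial>lborel) \<le> ennreal (C * exp (- k * c))"
proof -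
  have "(\<integral>\<^sup>+p. ennreal (C * exp (- k * K p) * h p) * indicator E p \<partial>lborel) \<le>
      (\<integral>\<^sup>+p. ennreal (C * exp (- k * c)) * ennreal (h2 \<theta> p) \<partial>lborel)"
  proof (intro nn_integral_mono)
    fix p
    show "ennreal (C * exp (- k * K p) * h p) * indicator E p \<le> ennreal (C * exp (- k * c)) * ennreal (h2 \<theta> p)"
    proof (cases "p \<in> E \<and> h p \<noteq> 0")
      case True
      then have "c \<le> K p" using KE by blast
      then have "exp (- k * K p) \<le> exp (- k * c)" using k by (simp add: mult_left_mono)
      then have "C * exp (- k * K p) * h p \<le> C * exp (- k * c) * h2 \<theta> p"
        using C h[of p] by (intro mult_mono mult_left_mono) auto
      moreover have "ennreal (C * exp (- k * c)) * ennreal (h2 \<theta> p) = ennreal (C * exp (- k * c) * h2 \<theta> p)"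
        using C h2_nonneg[OF th] by (simp add: ennreal_mult)
      ultimately show ?thesis using True by (simp add: ennreal_leI)
    next
      case False
      then show ?thesis by auto
    qed
  qed
  also have "\<dots> = ennreal (C * exp (- k * c)) * (\<integral>\<^sup>+p. ennreal (h2 \<theta> p) \<partial>lborel)"
    by (simp add: nn_integral_cmult)
  also have "\<dots> \<le> ennreal (C * exp (- k * c)) * 1"
    using h2_int[OF th] by (intro mult_left_mono) auto
  finally show ?thesis by simp
qed

lemma lborel_box: "emeasure lborel ({a1..a2} \<times> {t1..t2}) = ennreal ((a2 - a1) * (t2 - t1))"
  if "a1 \<le> a2" "t1 \<le> t2" for a1 a2 t1 t2 :: real
proof -
  have "emeasure (lborel :: (real \<times> real) measure) ({a1..a2} \<times> {t1..t2}) =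
      emeasure (lborel \<Otimes>\<^sub>M lborel) ({a1..a2} \<times> {t1..t2})"
    by (simp add: lborel_prod)
  also have "\<dots> = emeasure lborel {a1..a2} * emeasure lborel {t1..t2}"
    by (rule lborel.emeasure_pair_measure_Times) auto
  also have "\<dots> = ennreal ((a2 - a1) * (t2 - t1))"
    using that by (simp add: ennreal_mult)
  finally show ?thesis .
qed

lemma laplace_lower:
  fixes K h :: "real \<times> real \<Rightarrow> real"
  assumes box: "{a1..a2} \<times> {t1..t2} \<subseteq> E" "a1 \<le> a2" "t1 \<le> t2"
    and bnd: "\<And>p. p \<in> {a1..a2} \<times> {t1..t2} \<Longrightarrow> K p \<le> c \<and> \<kappa> \<le> h p"
    and C: "0 \<le> C" and kap: "0 \<le> \<kappa>" and k: "0 \<le> k"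
  shows "ennreal (C * exp (- k * c) * \<kappa> * ((a2 - a1) * (t2 - t1))) \<le>
     (\<integral>\<^sup>+p. ennreal (C * exp (- k * K p) * h p) * indicator E p \<partial>lborel)"
proof -
  let ?B = "{a1..a2} \<times> {t1..t2}"
  have "ennreal (C * exp (- k * c) * \<kappa> * ((a2 - a1) * (t2 - t1))) =
      ennreal (C * exp (- k * c) * \<kappa>) * emeasure lborel ?B"
    using box C kap by (simp add: lborel_box ennreal_mult)
  also have "\<dots> = (\<integral>\<^sup>+p. ennreal (C * exp (- k * c) * \<kappa>) * indicator ?B p \<partial>lborel)"
    by (rule nn_integral_cmult_indicator[symmetric]) (auto intro!: borel_closed closed_Times)
  also have "\<dots> \<le> (\<integral>\<^sup>+p. ennreal (C * exp (- k * K p) * h p) * indicator E p \<partial>lborel)"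
  proof (intro nn_integral_mono)
    fix p
    show "ennreal (C * exp (- k * c) * \<kappa>) * indicator ?B p \<le> ennreal (C * exp (- k * K p) * h p) * indicator E p"
    proof (cases "p \<in> ?B")
      case True
      then have "K p \<le> c" "\<kappa> \<le> h p" using bnd by auto
      then have "exp (- k * c) \<le> exp (- k * K p)" using k by (simp add: mult_left_mono)
      then have "C * exp (- k * c) * \<kappa> \<le> C * exp (- k * K p) * h p"
        using C kap \<open>\<kappa> \<le> h p\<close> by (intro mult_mono mult_left_mono) auto
      then show ?thesis using True box(1) by (auto simp: ennreal_leI)
    qed simp
  qed
  finally show ?thesis .
qed

lemma box_near:
  fixes K h :: "real \<times> real \<Rightarrow> real"
  assumes U: "open U" "p0 \<in> U" and cK: "isCont K p0" and ch: "isCont h p0"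
    and hp: "0 < h p0" and e: "0 < \<epsilon>"
  shows "\<exists>a1 a2 t1 t2. a1 < a2 \<and> t1 < t2 \<and> {a1..a2} \<times> {t1..t2} \<subseteq> U \<and>
     (\<forall>p\<in>{a1..a2} \<times> {t1..t2}. K p \<le> K p0 + \<epsilon> \<and> h p0 / 2 \<le> h p)"
proof -
  obtain d0 where d0: "0 < d0" "ball p0 d0 \<subseteq> U" using U openE by blast
  obtain d1 where d1: "0 < d1" "\<And>p. dist p p0 < d1 \<Longrightarrow> dist (K p) (K p0) < \<epsilon>"
    using cK e unfolding continuous_at_eps_delta by blast
  obtain d2 where d2: "0 < d2" "\<And>p. dist p p0 < d2 \<Longrightarrow> dist (h p) (h p0) < h p0 / 2"
    using ch hp unfolding continuous_at_eps_delta by (metis half_gt_zero)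
  define r where "r = min d0 (min d1 d2) / 4"
  have r: "0 < r" "2 * r < d0" "2 * r < d1" "2 * r < d2" using d0 d1 d2 by (auto simp: r_def)
  obtain a0 t0 where p0: "p0 = (a0, t0)" by fastforce
  have dist_box: "dist p p0 \<le> 2 * r" if "p \<in> {a0 - r..a0 + r} \<times> {t0 - r..t0 + r}" for p
  proof -
    obtain a t where p: "p = (a, t)" by fastforce
    have "dist a a0 \<le> r" "dist t t0 \<le> r" using that p by (auto simp: dist_real_def)
    then have "sqrt ((dist a a0)\<^sup>2 + (dist t t0)\<^sup>2) \<le> dist a a0 + dist t t0"
      by (intro sqrt_sum_squares_le_sum) auto
    moreover have "dist a a0 + dist t t0 \<le> 2 * r" using \<open>dist a a0 \<le> r\<close> \<open>dist t t0 \<le> r\<close> by simp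
    ultimately show "dist p p0 \<le> 2 * r" using p p0 by (simp add: dist_Pair_Pair)
  qed
  show ?thesis
  proof (intro exI conjI ballI)
    show "a0 - r < a0 + r" "t0 - r < t0 + r" using r by auto
    show "{a0 - r..a0 + r} \<times> {t0 - r..t0 + r} \<subseteq> U"
    proof
      fix p assume "p \<in> {a0 - r..a0 + r} \<times> {t0 - r..t0 + r}"
      then have "dist p p0 < d0" using dist_box r by fastforce
      then show "p \<in> U" using d0 by (auto simp: dist_commute)
    qed
    fix p assume pb: "p \<in> {a0 - r..a0 + r} \<times> {t0 - r..t0 + r}"
    have "dist (K p) (K p0) < \<epsilon>" using d1(2)[of p] dist_box[OF pb] r by linarith
    then show "K p \<le> K p0 + \<epsilon>" by (simp add: dist_real_def)
    have "dist (h p) (h p0) < h p0 / 2" using d2(2)[of p] dist_box[OF pb] r by linarith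
    then have "\<bar>h p - h p0\<bar> < h p0 / 2" by (simp add: dist_real_def)
    then show "h p0 / 2 \<le> h p" by linarith
  qed
qed


lemma eln_mono: assumes "x \<le> y" shows "eln x \<le> eln y"
proof (cases "x = 0")
  case True then show ?thesis by (simp add: eln_def)
next
  case x0: False
  show ?thesis
  proof (cases "y = \<top>")
    case True then show ?thesis using x0 by (auto simp: eln_def)
  next
    case yt: False
    then have xt: "x \<noteq> \<top>" using assms top.extremum_uniqueI by auto
    have y0: "y \<noteq> 0" using x0 assms by auto
    have "0 < enn2real x" using x0 xt by (simp add: enn2real_positive_iff less_top zero_less_iff_neq_zero)
    moreover have "enn2real x \<le> enn2real y" using assms yt by (simp add: enn2real_mono less_top)
    ultimately show ?thesis using x0 xt y0 yt by (simp add: eln_def)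
  qed
qed

lemma eln_ennreal: "0 < y \<Longrightarrow> eln (ennreal y) = ereal (ln y)"
  by (simp add: eln_def)

lemma ereal_div_le: assumes "x \<le> ereal a" "0 < r" shows "x / ereal r \<le> ereal (a / r)"
proof -
  have "x / ereal r \<le> ereal a / ereal r" using assms by (intro ereal_divide_right_mono) auto
  then show ?thesis using assms by (simp add: ereal_divide)
qed

lemma ereal_div_ge: assumes "ereal a \<le> x" "0 < r" shows "ereal (a / r) \<le> x / ereal r"
proof -
  have "ereal a / ereal r \<le> x / ereal r" using assms by (intro ereal_divide_right_mono) auto
  then show ?thesis using assms by (simp add: ereal_divide)
qed

lemma limsup_upper:
  assumes ev: "eventually (\<lambda>n. X n \<le> ennreal (C n * exp (- (real n - 2) * c))) sequentially"
    and Cpos: "\<And>n. 0 < C n" and lim: "((\<lambda>n. ln (C n) / real n) \<longlongrightarrow> 0) sequentially"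
  shows "limsup (\<lambda>n. eln (X n) / ereal (real n)) \<le> ereal (- c)"
proof -
  define u where "u n = (ln (C n) - (real n - 2) * c) / real n" for n
  have ul: "(u \<longlongrightarrow> - c) sequentially"
  proof -
    have "((\<lambda>n. ln (C n) / real n + (- c + 2 * c / real n)) \<longlongrightarrow> 0 + (- c + 0)) sequentially"
      by (intro tendsto_intros lim tendsto_divide_0[OF tendsto_const] filterlim_real_sequentially)
    moreover have "eventually (\<lambda>n. ln (C n) / real n + (- c + 2 * c / real n) = u n) sequentially"
      using eventually_ge_at_top[of 1] by eventually_elim (auto simp: u_def field_simps)
    ultimately show ?thesis by (simp add: tendsto_cong)
  qed
  have "eventually (\<lambda>n. eln (X n) / ereal (real n) \<le> ereal (u n)) sequentially"
    using ev eventually_ge_at_top[of 1]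
  proof eventually_elim
    case (elim n)
    have "eln (X n) \<le> eln (ennreal (C n * exp (- (real n - 2) * c)))" by (rule eln_mono[OF elim(1)])
    also have "\<dots> = ereal (ln (C n) - (real n - 2) * c)"
      using Cpos[of n] by (simp add: eln_ennreal ln_mult algebra_simps)
    finally show ?case unfolding u_def using elim by (intro ereal_div_le) auto
  qed
  then have "limsup (\<lambda>n. eln (X n) / ereal (real n)) \<le> limsup (\<lambda>n. ereal (u n))"
    by (rule Limsup_mono)
  also have "\<dots> = ereal (- c)"
    using ul by (intro lim_imp_Limsup) (auto intro: tendsto_ereal)
  finally show ?thesis .
qed

lemma liminf_lower:
  assumes ev: "eventually (\<lambda>n. ennreal (C n * exp (- (real n - 2) * c) * \<kappa>) \<le> X n) sequentially"
    and Cpos: "\<And>n. 0 < C n" and lim: "((\<lambda>n. ln (C n) / real n) \<longlongrightarrow> 0) sequentially"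
    and kap: "0 < \<kappa>"
  shows "ereal (- c) \<le> liminf (\<lambda>n. eln (X n) / ereal (real n))"
proof -
  define u where "u n = (ln (C n) - (real n - 2) * c + ln \<kappa>) / real n" for n
  have ul: "(u \<longlongrightarrow> - c) sequentially"
  proof -
    have "((\<lambda>n. ln (C n) / real n + (- c + (2 * c + ln \<kappa>) / real n)) \<longlongrightarrow> 0 + (- c + 0)) sequentially"
      by (intro tendsto_intros lim tendsto_divide_0[OF tendsto_const] filterlim_real_sequentially)
    moreover have "eventually (\<lambda>n. ln (C n) / real n + (- c + (2 * c + ln \<kappa>) / real n) = u n) sequentially"
      using eventually_ge_at_top[of 1] by eventually_elim (auto simp: u_def field_simps)
    ultimately show ?thesis by (simp add: tendsto_cong)
  qed
  have "eventually (\<lambda>n. ereal (u n) \<le> eln (X n) / ereal (real n)) sequentially"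
    using ev eventually_ge_at_top[of 1]
  proof eventually_elim
    case (elim n)
    have "ereal (ln (C n) - (real n - 2) * c + ln \<kappa>) = eln (ennreal (C n * exp (- (real n - 2) * c) * \<kappa>))"
      using Cpos[of n] kap by (simp add: eln_ennreal ln_mult algebra_simps)
    also have "\<dots> \<le> eln (X n)" using elim by (intro eln_mono) auto
    finally show ?case unfolding u_def using elim by (intro ereal_div_ge) auto
  qed
  then have "liminf (\<lambda>n. ereal (u n)) \<le> liminf (\<lambda>n. eln (X n) / ereal (real n))"
    by (rule Liminf_mono)
  moreover have "liminf (\<lambda>n. ereal (u n)) = ereal (- c)"
    using ul by (intro lim_imp_Liminf) (auto intro: tendsto_ereal)
  ultimately show ?thesis by simp
qed

lemma lim_eln:
  assumes ev1: "eventually (\<lambda>n. X n \<le> ennreal (C n * exp (- (real n - 2) * c))) sequentially"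
    and ev2: "eventually (\<lambda>n. ennreal (C n * exp (- (real n - 2) * c) * \<kappa>) \<le> X n) sequentially"
    and Cpos: "\<And>n. 0 < C n" and lim: "((\<lambda>n. ln (C n) / real n) \<longlongrightarrow> 0) sequentially"
    and kap: "0 < \<kappa>"
  shows "((\<lambda>n. - eln (X n) / ereal (real n)) \<longlongrightarrow> ereal c) sequentially"
proof -
  define y where "y n = - ln (enn2real (X n)) / real n" for n
  define lo where "lo n = - (ln (C n) - (real n - 2) * c) / real n" for n
  define hi where "hi n = - (ln (C n) - (real n - 2) * c + ln \<kappa>) / real n" for n
  have lo: "(lo \<longlongrightarrow> c) sequentially"
  proof -
    have "((\<lambda>n. - (ln (C n) / real n) + (c - 2 * c / real n)) \<longlongrightarrow> - 0 + (c - 0)) sequentially"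
      by (intro tendsto_intros lim tendsto_divide_0[OF tendsto_const] filterlim_real_sequentially)
    moreover have "eventually (\<lambda>n. - (ln (C n) / real n) + (c - 2 * c / real n) = lo n) sequentially"
      using eventually_ge_at_top[of 1] by eventually_elim (auto simp: lo_def field_simps)
    ultimately show ?thesis by (simp add: tendsto_cong)
  qed
  have hi: "(hi \<longlongrightarrow> c) sequentially"
  proof -
    have "((\<lambda>n. - (ln (C n) / real n) + (c - (2 * c + ln \<kappa>) / real n)) \<longlongrightarrow> - 0 + (c - 0)) sequentially"
      by (intro tendsto_intros lim tendsto_divide_0[OF tendsto_const] filterlim_real_sequentially)
    moreover have "eventually (\<lambda>n. - (ln (C n) / real n) + (c - (2 * c + ln \<kappa>) / real n) = hi n) sequentially"
      using eventually_ge_at_top[of 1] by eventually_elim (auto simp: hi_def field_simps)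
    ultimately show ?thesis by (simp add: tendsto_cong)
  qed
  have evs: "eventually (\<lambda>n. lo n \<le> y n \<and> y n \<le> hi n \<and> - eln (X n) / ereal (real n) = ereal (y n)) sequentially"
    using ev1 ev2 eventually_ge_at_top[of 1]
  proof eventually_elim
    case (elim n)
    let ?U = "C n * exp (- (real n - 2) * c)"
    have U: "0 < ?U" using Cpos[of n] by simp
    have L: "0 < ?U * \<kappa>" using U kap by simp
    have xt: "X n \<noteq> \<top>" using elim(1) by (auto simp: top_unique)
    have e1: "enn2real (X n) \<le> ?U"
      using enn2real_mono[OF elim(1)] U by simp
    have e2: "?U * \<kappa> \<le> enn2real (X n)"
      using enn2real_mono[OF elim(2)] xt L by (simp add: less_top)
    have x0: "0 < enn2real (X n)" using e2 L by linarith
    have "ln (enn2real (X n)) \<le> ln ?U" using e1 x0 by simp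
    also have "ln ?U = ln (C n) - (real n - 2) * c" using Cpos[of n] by (simp add: ln_mult algebra_simps)
    finally have l1: "ln (enn2real (X n)) \<le> ln (C n) - (real n - 2) * c" .
    have l2: "ln (C n) - (real n - 2) * c + ln \<kappa> \<le> ln (enn2real (X n))"
    proof -
      have "ln (?U * \<kappa>) \<le> ln (enn2real (X n))" using e2 L by simp
      then show ?thesis using Cpos[of n] kap by (simp add: ln_mult algebra_simps)
    qed
    have n: "0 < real n" using elim by simp
    have "lo n \<le> y n" unfolding lo_def y_def by (rule divide_right_mono) (use l1 n in auto)
    moreover have "y n \<le> hi n" unfolding hi_def y_def by (rule divide_right_mono) (use l2 n in auto)
    moreover have "eln (X n) = ereal (ln (enn2real (X n)))"
      using x0 xt by (auto simp: eln_def)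
    then have "- eln (X n) / ereal (real n) = ereal (y n)"
      using n by (simp add: y_def ereal_divide)
    ultimately show ?case by blast
  qed
  have "(y \<longlongrightarrow> c) sequentially"
    by (rule tendsto_sandwich[OF _ _ lo hi]) (use evs in \<open>auto elim: eventually_mono\<close>)
  then have "((\<lambda>n. ereal (y n)) \<longlongrightarrow> ereal c) sequentially" by (rule tendsto_ereal)
  then show ?thesis
    by (rule Lim_transform_eventually) (use evs in \<open>auto elim: eventually_mono\<close>)
qed


definition Mi :: "real \<Rightarrow> nat \<Rightarrow> nat \<Rightarrow> real measure" where
  "Mi \<theta> n i = density lborel (\<lambda>x. ennreal (exponential_density (if i < n - 1 then \<theta> else 1) x))"

lemma Qn_eq: "Qn \<theta> n = PiM {..<n} (Mi \<theta> n)"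
  unfolding Qn_def Mi_def ..

lemma sets_Mi[simp, measurable_cong]: "sets (Mi \<theta> n i) = sets borel"
  by (simp add: Mi_def)

lemma space_Mi[simp]: "space (Mi \<theta> n i) = UNIV"
  by (simp add: Mi_def)

lemma prob_Mi: "0 < \<theta> \<Longrightarrow> prob_space (Mi \<theta> n i)"
  unfolding Mi_def by (rule prob_space_exponential_density) auto

lemma pps_Mi: "0 < \<theta> \<Longrightarrow> product_prob_space (Mi \<theta> n)"
  by (intro product_prob_spaceI prob_Mi)

lemma prob_Qn: assumes "0 < \<theta>" shows "prob_space (Qn \<theta> n)"
proof -
  interpret product_prob_space "Mi \<theta> n" "{..<n}" using pps_Mi[OF assms] .
  show ?thesis unfolding Qn_eq by (rule prob_space_axioms)
qed

lemma sets_Qn[measurable_cong]: "sets (Qn \<theta> n) = sets (PiM {..<n} (\<lambda>i. borel))"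
  unfolding Qn_eq by (intro sets_PiM_cong) auto

lemma distr_Qn_comp:
  assumes "0 < \<theta>" "i < n"
  shows "distr (Qn \<theta> n) borel (\<lambda>x. x i) = Mi \<theta> n i"
proof -
  have "distr (Qn \<theta> n) borel (\<lambda>x. x i) = distr (PiM {..<n} (Mi \<theta> n)) (Mi \<theta> n i) (\<lambda>x. x i)"
    unfolding Qn_eq by (intro distr_cong) auto
  also have "\<dots> = Mi \<theta> n i"
    by (rule distr_PiM_component) (use assms prob_Mi in auto)
  finally show ?thesis .
qed

lemma indep_Qn:
  assumes "0 < \<theta>" "0 < n"
  shows "prob_space.indep_vars (Qn \<theta> n) (\<lambda>i. borel) (\<lambda>i x. x i) {..<n}"
proof -
  have False: "n \<noteq> 0" using assms by simp
  interpret prob_space "Qn \<theta> n" using prob_Qn[OF assms(1)] .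
  show ?thesis
  proof (subst indep_vars_iff_distr_eq_PiM')
    show "{..<n} \<noteq> {}" using False by auto
    show "random_variable borel (\<lambda>x. x i)" if "i \<in> {..<n}" for i
      using that by (subst measurable_cong_sets[OF sets_Qn refl]) (auto intro!: measurable_component_singleton)
    have "distr (Qn \<theta> n) (Pi\<^sub>M {..<n} (\<lambda>i. borel)) (\<lambda>x. \<lambda>i\<in>{..<n}. x i) =
        distr (Qn \<theta> n) (Pi\<^sub>M {..<n} (\<lambda>i. borel)) (\<lambda>x. x)"
      by (intro distr_cong) (auto simp: Qn_eq space_PiM)
    also have "\<dots> = Qn \<theta> n" by (rule distr_id2) (simp add: sets_Qn)
    also have "\<dots> = Pi\<^sub>M {..<n} (\<lambda>i. distr (Qn \<theta> n) borel (\<lambda>x. x i))"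
      unfolding Qn_eq by (intro PiM_cong) (auto simp: distr_Qn_comp[OF assms(1), unfolded Qn_eq])
    finally show "distr (Qn \<theta> n) (Pi\<^sub>M {..<n} (\<lambda>i. borel)) (\<lambda>x. \<lambda>i\<in>{..<n}. x i) =
        Pi\<^sub>M {..<n} (\<lambda>i. distr (Qn \<theta> n) borel (\<lambda>x. x i))" .
  qed
qed

lemma distributed_comp:
  assumes "0 < \<theta>" "i < n"
  shows "distributed (Qn \<theta> n) lborel (\<lambda>x. x i)
     (\<lambda>x. ennreal (exponential_density (if i < n - 1 then \<theta> else 1) x))"
  unfolding distributed_def
proof (intro conjI)
  have "distr (Qn \<theta> n) lborel (\<lambda>x. x i) = distr (Qn \<theta> n) borel (\<lambda>x. x i)"
    by (intro distr_cong) auto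
  also have "\<dots> = Mi \<theta> n i" using distr_Qn_comp[OF assms] .
  finally show "distr (Qn \<theta> n) lborel (\<lambda>x. x i) = density lborel (\<lambda>x. ennreal (exponential_density (if i < n - 1 then \<theta> else 1) x))"
    by (simp add: Mi_def)
  show "(\<lambda>x. ennreal (exponential_density (if i < n - 1 then \<theta> else 1) x)) \<in> borel_measurable lborel"
    by simp
  show "(\<lambda>x. x i) \<in> Qn \<theta> n \<rightarrow>\<^sub>M lborel"
    using assms by (subst measurable_cong_sets[OF sets_Qn refl]) (auto intro!: measurable_component_singleton)
qed

lemma law_AT:
  fixes f :: "real \<times> real \<Rightarrow> ennreal"
  assumes th: "0 < \<theta>" and n2: "2 \<le> n" and f[measurable]: "f \<in> borel_measurable borel"
  shows "(\<integral>\<^sup>+x. f ((\<Sum>i<n-1. x i) / real n, x (n-1) / real n) \<partial>Qn \<theta> n) =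
     (\<integral>\<^sup>+p. ennreal (gd \<theta> n p) * f p \<partial>lborel)"
proof -
  interpret prob_space "Qn \<theta> n" using prob_Qn[OF th] .
  have n0: "0 < n" using n2 by simp
  define A where "A x = (\<Sum>i<n-1. x i) / real n" for x :: "nat \<Rightarrow> real"
  define T where "T x = x (n-1) / real n" for x :: "nat \<Rightarrow> real"
  define eA where "eA x = ennreal (erlang_density (n - 2) (real n * \<theta>) x)" for x
  define eT where "eT x = ennreal (erlang_density 0 (real n) x)" for x
  have ind: "indep_vars (\<lambda>i. borel) (\<lambda>i x. x i) {..<n}" using indep_Qn[OF th n0] .
  have ind2: "indep_var (PiM {..<n-1} (\<lambda>i. borel)) (\<lambda>x. \<lambda>i\<in>{..<n-1}. x i)
        (PiM {n-1} (\<lambda>i. borel)) (\<lambda>x. \<lambda>i\<in>{n-1}. x i)"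
    using indep_var_restrict[OF ind] n0 by auto
  have ind3: "indep_var borel ((\<lambda>y. (\<Sum>i<n-1. y i) / real n) \<circ> (\<lambda>x. \<lambda>i\<in>{..<n-1}. x i))
     borel ((\<lambda>y. y (n-1) / real n) \<circ> (\<lambda>x. \<lambda>i\<in>{n-1}. x i))"
    by (rule indep_var_compose[OF ind2]) auto
  have e1: "((\<lambda>y. (\<Sum>i<n-1. y i) / real n) \<circ> (\<lambda>x. \<lambda>i\<in>{..<n-1}. x i)) = A"
    by (auto simp: A_def fun_eq_iff)
  have e2: "((\<lambda>y. y (n-1) / real n) \<circ> (\<lambda>x. \<lambda>i\<in>{n-1}. x i)) = T"
    by (auto simp: T_def fun_eq_iff)
  have indAT: "indep_var borel A borel T" using ind3 unfolding e1 e2 .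
  have dS: "distributed (Qn \<theta> n) lborel (\<lambda>x. \<Sum>i\<in>{..<n-1}. x i) (\<lambda>x. ennreal (erlang_density (card {..<n-1} - 1) \<theta> x))"
  proof (rule exponential_distributed_sum)
    have "0 \<in> {..<n-1}" using n2 by simp
    then show "{..<n-1} \<noteq> {}" by blast
    show "indep_vars (\<lambda>i. borel) (\<lambda>i x. x i) {..<n-1}"
      by (rule indep_vars_subset[OF ind]) auto
    fix i assume "i \<in> {..<n-1}"
    then show "distributed (Qn \<theta> n) lborel (\<lambda>x. x i) (\<lambda>x. ennreal (exponential_density \<theta> x))"
      using distributed_comp[OF th, of i n] by auto
  qed (use th in auto)
  have dA: "distributed (Qn \<theta> n) lborel A eA"
  proof -
    have "distributed (Qn \<theta> n) lborel (\<lambda>x. (1 / real n) * (\<Sum>i\<in>{..<n-1}. x i)) (\<lambda>x. ennreal (erlang_density (card {..<n-1} - 1) (\<theta> / (1 / real n)) x))"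
      by (rule erlang_distributed_mult_const[OF dS]) (use th n0 in auto)
    moreover have "(\<lambda>x. (1 / real n) * (\<Sum>i\<in>{..<n-1}. x i)) = A" by (auto simp: A_def fun_eq_iff)
    moreover have "card {..<n-1} - 1 = n - 2" by simp
    moreover have "\<theta> / (1 / real n) = real n * \<theta>" by simp
    moreover have "eA = (\<lambda>x. ennreal (erlang_density (n - 2) (\<theta> * real n) x))"
      by (simp add: eA_def fun_eq_iff mult.commute)
    ultimately show ?thesis by simp
  qed
  have dT: "distributed (Qn \<theta> n) lborel T eT"
  proof -
    have d0: "distributed (Qn \<theta> n) lborel (\<lambda>x. x (n-1)) (\<lambda>x. ennreal (erlang_density 0 1 x))"
      using distributed_comp[OF th, of "n-1" n] n0 by auto
    have "distributed (Qn \<theta> n) lborel (\<lambda>x. (1 / real n) * x (n-1)) (\<lambda>x. ennreal (erlang_density 0 (1 / (1 / real n)) x))"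
      by (rule erlang_distributed_mult_const[OF d0]) (use n0 in auto)
    moreover have "(\<lambda>x. (1 / real n) * x (n-1)) = T" by (auto simp: T_def fun_eq_iff)
    moreover have "eT = (\<lambda>x. ennreal (erlang_density 0 (real n) x))" by (simp add: eT_def fun_eq_iff)
    ultimately show ?thesis by simp
  qed
  have meA[measurable]: "eA \<in> borel_measurable borel" unfolding eA_def by measurable
  have meT[measurable]: "eT \<in> borel_measurable borel" unfolding eT_def by measurable
  have mA[measurable]: "A \<in> borel_measurable (Qn \<theta> n)" using dA by (auto simp: distributed_def)
  have mT[measurable]: "T \<in> borel_measurable (Qn \<theta> n)" using dT by (auto simp: distributed_def)
  have jd: "distr (Qn \<theta> n) borel A \<Otimes>\<^sub>M distr (Qn \<theta> n) borel T = distr (Qn \<theta> n) (borel \<Otimes>\<^sub>M borel) (\<lambda>x. (A x, T x))"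
    using indAT indep_var_distribution_eq by blast
  have dA': "distr (Qn \<theta> n) borel A = density lborel eA"
  proof -
    have "distr (Qn \<theta> n) borel A = distr (Qn \<theta> n) lborel A" by (intro distr_cong) auto
    then show ?thesis using dA by (simp add: distributed_def)
  qed
  have dT': "distr (Qn \<theta> n) borel T = density lborel eT"
  proof -
    have "distr (Qn \<theta> n) borel T = distr (Qn \<theta> n) lborel T" by (intro distr_cong) auto
    then show ?thesis using dT by (simp add: distributed_def)
  qed
  have pd: "density lborel eA \<Otimes>\<^sub>M density lborel eT = density (lborel \<Otimes>\<^sub>M lborel) (\<lambda>(x, y). eA x * eT y)"
  proof (rule pair_measure_density)
    show "eA \<in> borel_measurable lborel" "eT \<in> borel_measurable lborel" by (auto simp: eA_def eT_def)
    show "sigma_finite_measure lborel" by (rule lborel.sigma_finite_measure_axioms)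
    have "prob_space (density lborel eT)" unfolding eT_def
      by (rule prob_space_erlang_density) (use n0 in auto)
    then show "sigma_finite_measure (density lborel eT)" by (rule prob_space_imp_sigma_finite)
  qed
  have "(\<integral>\<^sup>+x. f (A x, T x) \<partial>Qn \<theta> n) = (\<integral>\<^sup>+p. f p \<partial>distr (Qn \<theta> n) (borel \<Otimes>\<^sub>M borel) (\<lambda>x. (A x, T x)))"
  proof (rule nn_integral_distr[symmetric])
    show "random_variable (borel \<Otimes>\<^sub>M borel) (\<lambda>x. (A x, T x))" by measurable
    show "f \<in> borel_measurable (distr (Qn \<theta> n) (borel \<Otimes>\<^sub>M borel) (\<lambda>x. (A x, T x)))"
      unfolding measurable_distr_eq1 borel_prod by (rule f)
  qed
  also have "\<dots> = (\<integral>\<^sup>+p. f p \<partial>density (lborel \<Otimes>\<^sub>M lborel) (\<lambda>(x, y). eA x * eT y))"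
    unfolding jd[symmetric] dA' dT' pd ..
  also have "\<dots> = (\<integral>\<^sup>+p. (\<lambda>(x, y). eA x * eT y) p * f p \<partial>(lborel \<Otimes>\<^sub>M lborel))"
  proof (rule nn_integral_density)
    show "(\<lambda>(x, y). eA x * eT y) \<in> borel_measurable (lborel \<Otimes>\<^sub>M lborel)" by measurable
    show "f \<in> borel_measurable (lborel \<Otimes>\<^sub>M lborel)" by (simp add: lborel_prod)
  qed
  also have "\<dots> = (\<integral>\<^sup>+p. ennreal (gd \<theta> n p) * f p \<partial>lborel)"
  proof -
    have nn1: "\<And>x. 0 \<le> erlang_density (n-2) (real n * \<theta>) x" using th by simp
    have nn2: "\<And>x. 0 \<le> erlang_density 0 (real n) x" by simp
    show ?thesis unfolding lborel_prod
      by (intro nn_integral_cong) (simp add: gd_def eA_def eT_def split_beta ennreal_mult[OF nn1 nn2])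
  qed
  finally show ?thesis by (simp add: A_def T_def)
qed


definition rr :: "real \<Rightarrow> nat \<Rightarrow> nat \<Rightarrow> real \<Rightarrow> real" where
  "rr \<theta> n i y = exponential_density 1 y / exponential_density (if i < n - 1 then \<theta> else 1) y"

definition Lr :: "real \<Rightarrow> nat \<Rightarrow> (nat \<Rightarrow> real) \<Rightarrow> ennreal" where
  "Lr \<theta> n x = (\<Prod>i<n. ennreal (rr \<theta> n i (x i)))"

lemma rr_nonneg: "0 < \<theta> \<Longrightarrow> 0 \<le> rr \<theta> n i y"
  by (simp add: rr_def)

lemma rr_meas[measurable]: "rr \<theta> n i \<in> borel_measurable borel"
  unfolding rr_def by measurable

lemma q_rr: assumes "0 < \<theta>"
  shows "ennreal (exponential_density (if i < n - 1 then \<theta> else 1) y) * ennreal (rr \<theta> n i y) =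
     ennreal (exponential_density 1 y)"
proof (cases "y < 0")
  case True then show ?thesis by (simp add: rr_def exponential_density_def)
next
  case False
  have pos: "0 < exponential_density (if i < n - 1 then \<theta> else 1) y"
    using False assms by (simp add: exponential_density_def)
  then show ?thesis using assms
    by (simp add: rr_def ennreal_mult[symmetric] less_imp_le)
qed

lemma Lr_meas[measurable]: "Lr \<theta> n \<in> borel_measurable (Qn \<theta> n)"
  unfolding Lr_def by (subst measurable_cong_sets[OF sets_Qn refl]) measurable

lemma Pn_density: assumes "0 < \<theta>" shows "Pn n = density (Qn \<theta> n) (Lr \<theta> n)"
proof -
  interpret P: product_prob_space "\<lambda>i. density lborel (\<lambda>x. ennreal (exponential_density 1 x))" "{..<n}"
    by (intro product_prob_spaceI prob_space_exponential_density) simp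
  interpret Q: product_prob_space "Mi \<theta> n" "{..<n}" using pps_Mi[OF assms] .
  have "density (Qn \<theta> n) (Lr \<theta> n) = PiM {..<n} (\<lambda>i. density lborel (\<lambda>x. ennreal (exponential_density 1 x)))"
  proof (rule P.PiM_eqI)
    show "finite {..<n}" by simp
    show "sets (density (Qn \<theta> n) (Lr \<theta> n)) = sets (PiM {..<n} (\<lambda>i. density lborel (\<lambda>x. ennreal (exponential_density 1 x))))"
      by (simp add: sets_Qn cong: sets_PiM_cong)
    fix A assume A: "\<And>i. i \<in> {..<n} \<Longrightarrow> A i \<in> sets (density lborel (\<lambda>x. ennreal (exponential_density 1 x)))"
    then have A': "\<And>i. i \<in> {..<n} \<Longrightarrow> A i \<in> sets borel" by simp
    have PA: "Pi\<^sub>E {..<n} A \<in> sets (Qn \<theta> n)"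
      unfolding Qn_eq by (rule sets_PiM_I_finite) (use A' in auto)
    have "emeasure (density (Qn \<theta> n) (Lr \<theta> n)) (Pi\<^sub>E {..<n} A) =
        (\<integral>\<^sup>+x. Lr \<theta> n x * indicator (Pi\<^sub>E {..<n} A) x \<partial>Qn \<theta> n)"
      by (rule emeasure_density[OF Lr_meas PA])
    also have "\<dots> = (\<integral>\<^sup>+x. (\<Prod>i<n. ennreal (rr \<theta> n i (x i)) * indicator (A i) (x i)) \<partial>PiM {..<n} (Mi \<theta> n))"
      unfolding Qn_eq
    proof (intro nn_integral_cong)
      fix x assume "x \<in> space (PiM {..<n} (Mi \<theta> n))"
      then have ext: "x \<in> extensional {..<n}" by (simp add: space_PiM PiE_def)
      have "indicator (Pi\<^sub>E {..<n} A) x = (\<Prod>i<n. indicator (A i) (x i) :: ennreal)"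
        using ext by (auto simp: indicator_def PiE_def Pi_def prod_ennreal)
      then show "Lr \<theta> n x * indicator (Pi\<^sub>E {..<n} A) x = (\<Prod>i<n. ennreal (rr \<theta> n i (x i)) * indicator (A i) (x i))"
        by (simp add: Lr_def prod.distrib)
    qed
    also have "\<dots> = (\<Prod>i<n. \<integral>\<^sup>+y. ennreal (rr \<theta> n i y) * indicator (A i) y \<partial>Mi \<theta> n i)"
      by (rule Q.product_nn_integral_prod) (use A' in auto)
    also have "\<dots> = (\<Prod>i<n. emeasure (density lborel (\<lambda>x. ennreal (exponential_density 1 x))) (A i))"
    proof (intro prod.cong refl)
      fix i assume i: "i \<in> {..<n}"
      have "(\<integral>\<^sup>+y. ennreal (rr \<theta> n i y) * indicator (A i) y \<partial>Mi \<theta> n i) =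
         (\<integral>\<^sup>+y. ennreal (exponential_density (if i < n - 1 then \<theta> else 1) y) * (ennreal (rr \<theta> n i y) * indicator (A i) y) \<partial>lborel)"
        unfolding Mi_def using A'[OF i] by (subst nn_integral_density) auto
      also have "\<dots> = (\<integral>\<^sup>+y. ennreal (exponential_density 1 y) * indicator (A i) y \<partial>lborel)"
        using q_rr[OF assms] by (simp add: mult.assoc[symmetric])
      also have "\<dots> = emeasure (density lborel (\<lambda>x. ennreal (exponential_density 1 x))) (A i)"
        using A'[OF i] by (subst emeasure_density) auto
      finally show "(\<integral>\<^sup>+y. ennreal (rr \<theta> n i y) * indicator (A i) y \<partial>Mi \<theta> n i) =
          emeasure (density lborel (\<lambda>x. ennreal (exponential_density 1 x))) (A i)" .
    qed
    finally show "emeasure (density (Qn \<theta> n) (Lr \<theta> n)) (Pi\<^sub>E {..<n} A) =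
        (\<Prod>i\<in>{..<n}. emeasure (density lborel (\<lambda>x. ennreal (exponential_density 1 x))) (A i))" .
  qed
  then show ?thesis by (simp add: Pn_def)
qed

lemma AE_Ln: assumes "0 < \<theta>" shows "AE x in Qn \<theta> n. Lr \<theta> n x = Ln \<theta> n x"
proof -
  interpret prob_space "Qn \<theta> n" using prob_Qn[OF assms] .
  show ?thesis unfolding Ln_def
    by (rule RN_deriv_unique[OF Lr_meas]) (simp add: Pn_density[OF assms])
qed

lemma AE_nonneg: assumes "0 < \<theta>" shows "AE x in Qn \<theta> n. \<forall>i\<in>{..<n}. 0 \<le> x i"
proof (subst AE_finite_all)
  show "finite {..<n}" by simp
  show "\<forall>i\<in>{..<n}. AE x in Qn \<theta> n. 0 \<le> x i"
  proof
    fix i assume i: "i \<in> {..<n}"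
    have m: "(\<lambda>x. x i) \<in> Qn \<theta> n \<rightarrow>\<^sub>M borel"
      using i by (subst measurable_cong_sets[OF sets_Qn refl]) (auto intro!: measurable_component_singleton)
    have "AE y in distr (Qn \<theta> n) borel (\<lambda>x. x i). 0 \<le> y"
      unfolding distr_Qn_comp[OF assms i[simplified]] Mi_def
      by (subst AE_density) (auto simp: exponential_density_def)
    then show "AE x in Qn \<theta> n. 0 \<le> x i"
      by (rule AE_distrD[OF m])
  qed
qed


definition PsiN :: "real \<Rightarrow> nat \<Rightarrow> real \<times> real \<Rightarrow> real \<times> real" where
  "PsiN \<theta> n p = (fst p + snd p, (real n - 1) / real n * ln \<theta> + (1 - \<theta>) * fst p)"

lemma PsiN_cont: "continuous_on S (PsiN \<theta> n)"
  unfolding PsiN_def by (intro continuous_intros)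

lemma PsiN_meas[measurable]: "PsiN \<theta> n \<in> borel_measurable borel"
  using PsiN_cont by (rule borel_measurable_continuous_onI)

lemma Mn_split: assumes "1 \<le> n" shows "Mn n x = (\<Sum>i<n-1. x i) / real n + x (n-1) / real n"
proof -
  have "n = Suc (n - 1)" using assms by simp
  then have "(\<Sum>i<n. x i) = (\<Sum>i<n-1. x i) + x (n-1)"
    by (metis sum.lessThan_Suc)
  then show ?thesis by (simp add: Mn_def add_divide_distrib)
qed

lemma Lr_formula:
  assumes "0 < \<theta>" "1 \<le> n" "\<forall>i\<in>{..<n}. 0 \<le> x i"
  shows "Lr \<theta> n x = ennreal (exp (- (1 - \<theta>) * (\<Sum>i<n-1. x i)) / \<theta> ^ (n - 1))"
proof -
  have r1: "rr \<theta> n i (x i) = exp (- (1 - \<theta>) * x i) / \<theta>" if "i < n - 1" for i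
  proof -
    have xi: "0 \<le> x i" using assms that by auto
    have e: "exp (- x i) = exp (- (1 - \<theta>) * x i) * exp (- (\<theta> * x i))"
      by (simp add: exp_add[symmetric] algebra_simps)
    have "rr \<theta> n i (x i) = exp (- x i) / (\<theta> * exp (- (\<theta> * x i)))"
      using xi that by (simp add: rr_def exponential_density_def mult.commute)
    also have "\<dots> = exp (- (1 - \<theta>) * x i) / \<theta>"
      unfolding e using assms by simp
    finally show ?thesis .
  qed
  have r2: "rr \<theta> n (n-1) (x (n-1)) = 1"
  proof -
    have xn: "0 \<le> x (n-1)" using assms by auto
    show ?thesis using xn by (simp add: rr_def exponential_density_def)
  qed
  have "Lr \<theta> n x = ennreal (\<Prod>i<n. rr \<theta> n i (x i))"
    unfolding Lr_def using rr_nonneg[OF assms(1)] by (simp add: prod_ennreal)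
  also have "(\<Prod>i<n. rr \<theta> n i (x i)) = (\<Prod>i<n-1. rr \<theta> n i (x i)) * rr \<theta> n (n-1) (x (n-1))"
  proof -
    have "n = Suc (n - 1)" using assms by simp
    then show ?thesis by (metis prod.lessThan_Suc)
  qed
  also have "\<dots> = (\<Prod>i<n-1. exp (- (1 - \<theta>) * x i) / \<theta>)"
    using r1 r2 by simp
  also have "\<dots> = exp (- (1 - \<theta>) * (\<Sum>i<n-1. x i)) / \<theta> ^ (n - 1)"
    by (simp add: prod_dividef exp_sum[symmetric] sum_distrib_left)
  finally show ?thesis .
qed

lemma Ln_meas[measurable]: "Ln \<theta> n \<in> borel_measurable (Qn \<theta> n)"
  unfolding Ln_def by (rule borel_measurable_RN_deriv)

lemma Mn_meas[measurable]: "Mn n \<in> borel_measurable (Qn \<theta> n)"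
  unfolding Mn_def by (subst measurable_cong_sets[OF sets_Qn refl]) measurable

lemma Wn_meas[measurable]: "Wn \<theta> n \<in> borel_measurable (Qn \<theta> n)"
  unfolding Wn_def by measurable

lemma AE_MW:
  assumes "0 < \<theta>" "1 \<le> n"
  shows "AE x in Qn \<theta> n. (Mn n x, Wn \<theta> n x) = PsiN \<theta> n ((\<Sum>i<n-1. x i) / real n, x (n-1) / real n)
     \<and> Ln \<theta> n x = ennreal (exp (- (1 - \<theta>) * (\<Sum>i<n-1. x i)) / \<theta> ^ (n - 1))"
  using AE_Ln[OF assms(1), of n] AE_nonneg[OF assms(1), of n]
proof eventually_elim
  case (elim x)
  let ?S = "\<Sum>i<n-1. x i"
  have L: "Ln \<theta> n x = ennreal (exp (- (1 - \<theta>) * ?S) / \<theta> ^ (n - 1))"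
    using Lr_formula[OF assms elim(2)] elim(1) by simp
  have pos: "0 < exp (- (1 - \<theta>) * ?S) / \<theta> ^ (n - 1)" using assms by simp
  have l: "ln (exp (- (1 - \<theta>) * ?S) / \<theta> ^ (n - 1)) = - (1 - \<theta>) * ?S - real (n - 1) * ln \<theta>"
    using assms by (simp add: ln_div ln_realpow)
  have "Wn \<theta> n x = - ln (exp (- (1 - \<theta>) * ?S) / \<theta> ^ (n - 1)) / real n"
    unfolding Wn_def L using pos by simp
  also have "\<dots> = ((1 - \<theta>) * ?S + real (n - 1) * ln \<theta>) / real n"
    unfolding l by (simp add: algebra_simps)
  finally have W: "Wn \<theta> n x = ((1 - \<theta>) * ?S + real (n - 1) * ln \<theta>) / real n" .
  have rn: "real (n - 1) = real n - 1" using assms by simp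
  have np: "real n \<noteq> 0" using assms by simp
  have alg: "((1 - \<theta>) * ?S + (real n - 1) * ln \<theta>) / real n = (real n - 1) / real n * ln \<theta> + (1 - \<theta>) * (?S / real n)"
    using np by (simp add: field_simps)
  have "Wn \<theta> n x = (real n - 1) / real n * ln \<theta> + (1 - \<theta>) * (?S / real n)"
    unfolding W rn alg ..
  then show ?case using L Mn_split[OF assms(2), of x] by (simp add: PsiN_def)
qed

lemma lawMW_emeasure:
  assumes "0 < \<theta>" "2 \<le> n" "F \<in> sets borel"
  shows "emeasure (lawMW \<theta> n) F = (\<integral>\<^sup>+p. ennreal (gd \<theta> n p) * indicator F (PsiN \<theta> n p) \<partial>lborel)"
proof -
  have [measurable]: "F \<in> sets borel" using assms by simp
  have "emeasure (lawMW \<theta> n) F = (\<integral>\<^sup>+y. indicator F y \<partial>lawMW \<theta> n)"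
    by (simp add: lawMW_def)
  also have "\<dots> = (\<integral>\<^sup>+x. indicator F (Mn n x, Wn \<theta> n x) \<partial>Qn \<theta> n)"
    unfolding lawMW_def by (subst nn_integral_distr) auto
  also have "\<dots> = (\<integral>\<^sup>+x. indicator F (PsiN \<theta> n ((\<Sum>i<n-1. x i) / real n, x (n-1) / real n)) \<partial>Qn \<theta> n)"
    by (rule nn_integral_cong_AE) (use AE_MW[OF assms(1), of n] assms in \<open>auto elim: AE_mp\<close>)
  also have "\<dots> = (\<integral>\<^sup>+p. ennreal (gd \<theta> n p) * indicator F (PsiN \<theta> n p) \<partial>lborel)"
    by (rule law_AT[OF assms(1,2)]) measurable
  finally show ?thesis .
qed

lemma eff_int:
  assumes "0 < \<theta>" "2 \<le> n"
  shows "(\<integral>\<^sup>+ x. (Ln \<theta> n x)\<^sup>2 * indicator {x. Mn n x \<in> {b..}} x \<partial>Qn \<theta> n) =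
    (\<integral>\<^sup>+p. ennreal (gd \<theta> n p) * (ennreal ((exp (- (1 - \<theta>) * (real n * fst p)) / \<theta> ^ (n - 1))\<^sup>2)
        * indicator {p. b \<le> fst p + snd p} p) \<partial>lborel)"
proof -
  have n1: "1 \<le> n" using assms by simp
  have "(\<integral>\<^sup>+ x. (Ln \<theta> n x)\<^sup>2 * indicator {x. Mn n x \<in> {b..}} x \<partial>Qn \<theta> n) =
     (\<integral>\<^sup>+ x. (\<lambda>p. ennreal ((exp (- (1 - \<theta>) * (real n * fst p)) / \<theta> ^ (n - 1))\<^sup>2)
        * indicator {p. b \<le> fst p + snd p} p) ((\<Sum>i<n-1. x i) / real n, x (n-1) / real n) \<partial>Qn \<theta> n)"
  proof (rule nn_integral_cong_AE)
    show "AE x in Qn \<theta> n. (Ln \<theta> n x)\<^sup>2 * indicator {x. Mn n x \<in> {b..}} x =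
      (\<lambda>p. ennreal ((exp (- (1 - \<theta>) * (real n * fst p)) / \<theta> ^ (n - 1))\<^sup>2)
        * indicator {p. b \<le> fst p + snd p} p) ((\<Sum>i<n-1. x i) / real n, x (n-1) / real n)"
      using AE_MW[OF assms(1) n1]
    proof eventually_elim
      case (elim x)
      have "real n * ((\<Sum>i<n-1. x i) / real n) = (\<Sum>i<n-1. x i)" using n1 by simp
      moreover have "(Ln \<theta> n x)\<^sup>2 = ennreal ((exp (- (1 - \<theta>) * (\<Sum>i<n-1. x i)) / \<theta> ^ (n - 1))\<^sup>2)"
        using elim assms(1) by (simp add: ennreal_power)
      ultimately show ?case using Mn_split[OF n1, of x]
        by (simp add: indicator_def)
    qed
  qed
  also have "\<dots> = (\<integral>\<^sup>+p. ennreal (gd \<theta> n p) * (ennreal ((exp (- (1 - \<theta>) * (real n * fst p)) / \<theta> ^ (n - 1))\<^sup>2)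
        * indicator {p. b \<le> fst p + snd p} p) \<partial>lborel)"
    by (rule law_AT[OF assms(1,2)]) (unfold borel_prod[symmetric], measurable)
  finally show ?thesis .
qed

lemma Pn_Qn1: "Pn n = Qn 1 n"
  unfolding Pn_def Qn_def by simp

lemma Pn_int:
  assumes "2 \<le> n"
  shows "emeasure (Pn n) {x \<in> space (Pn n). Mn n x \<in> {b..}} =
    (\<integral>\<^sup>+p. ennreal (gd 1 n p) * indicator {p. b \<le> fst p + snd p} p \<partial>lborel)"
proof -
  have n1: "1 \<le> n" using assms by simp
  have "emeasure (Pn n) {x \<in> space (Pn n). Mn n x \<in> {b..}} = (\<integral>\<^sup>+x. indicator {x \<in> space (Qn 1 n). Mn n x \<in> {b..}} x \<partial>Qn 1 n)"
    unfolding Pn_Qn1 by (rule nn_integral_indicator[symmetric]) measurable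
  also have "\<dots> = (\<integral>\<^sup>+x. indicator {p. b \<le> fst p + snd p} ((\<Sum>i<n-1. x i) / real n, x (n-1) / real n) \<partial>Qn 1 n)"
    by (intro nn_integral_cong) (auto simp: indicator_def Mn_split[OF n1])
  also have "\<dots> = (\<integral>\<^sup>+p. ennreal (gd 1 n p) * indicator {p. b \<le> fst p + snd p} p \<partial>lborel)"
    by (rule law_AT) (use assms in \<open>auto simp: borel_prod[symmetric]\<close>)
  finally show ?thesis .
qed


lemma Cn_pos_all: "0 < Cn n"
  by (cases n) (auto simp: Cn_def)

lemma ereal_neg_div: "- (x / ereal r) = (- x) / ereal r"
  by (simp add: divide_ereal_def)

lemma lim_from_bounds:
  assumes up: "limsup (\<lambda>n. eln (X n) / ereal (real n)) \<le> ereal (- c)"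
    and low: "\<And>\<epsilon>. 0 < \<epsilon> \<Longrightarrow> ereal (- c - \<epsilon>) \<le> liminf (\<lambda>n. eln (X n) / ereal (real n))"
  shows "((\<lambda>n. - eln (X n) / ereal (real n)) \<longlongrightarrow> ereal c) sequentially"
proof -
  let ?f = "\<lambda>n. eln (X n) / ereal (real n)"
  have li: "ereal (- c) \<le> liminf ?f"
  proof (rule ereal_le_epsilon2)
    fix e :: real assume e: "0 < e"
    have "ereal (- c - e) \<le> liminf ?f" using low e .
    then have "ereal (- c - e) + ereal e \<le> liminf ?f + ereal e" by (rule add_right_mono)
    then show "ereal (- c) \<le> liminf ?f + ereal e" by simp
  qed
  have "liminf ?f \<le> limsup ?f" by (rule Liminf_le_Limsup) simp
  then have "liminf ?f = ereal (- c)" "limsup ?f = ereal (- c)" using li up by auto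
  then have "(?f \<longlongrightarrow> ereal (- c)) sequentially" by (intro Liminf_eq_Limsup) auto
  then have "((\<lambda>n. - ?f n) \<longlongrightarrow> - ereal (- c)) sequentially" by (rule tendsto_uminus_ereal)
  moreover have "(\<lambda>n. - ?f n) = (\<lambda>n. - eln (X n) / ereal (real n))"
    by (rule ext) (rule ereal_neg_div)
  moreover have "- ereal (- c) = ereal c" by simp
  ultimately show ?thesis by metis
qed

lemma laplace_lim:
  fixes K h hc :: "real \<times> real \<Rightarrow> real" and D :: "(real \<times> real) set"
  assumes th: "0 < \<theta>" and Cpos: "\<And>n. 0 < C n" and Clim: "((\<lambda>n. ln (C n) / real n) \<longlongrightarrow> 0) sequentially"
    and h: "\<And>p. 0 \<le> h p" "\<And>p. h p \<le> h2 \<theta> p"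
    and up: "\<And>p. p \<in> D \<Longrightarrow> h p \<noteq> 0 \<Longrightarrow> v \<le> K p"
    and low: "\<And>\<epsilon>. 0 < \<epsilon> \<Longrightarrow> \<exists>p1 U. open U \<and> p1 \<in> U \<and> U \<subseteq> D \<and> isCont K p1 \<and> isCont hc p1 \<and>
        0 < hc p1 \<and> K p1 \<le> v + \<epsilon> / 2 \<and> (\<forall>p\<in>U. h p = hc p)"
    and X: "eventually (\<lambda>n. X n = (\<integral>\<^sup>+p. ennreal (C n * exp (- (real n - 2) * K p) * h p) * indicator D p \<partial>lborel)) sequentially"
  shows "((\<lambda>n. - eln (X n) / ereal (real n)) \<longlongrightarrow> ereal v) sequentially"
proof (rule lim_from_bounds)
  show "limsup (\<lambda>n. eln (X n) / ereal (real n)) \<le> ereal (- v)"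
  proof (rule limsup_upper[OF _ Cpos Clim])
    show "eventually (\<lambda>n. X n \<le> ennreal (C n * exp (- (real n - 2) * v))) sequentially"
      using X eventually_ge_at_top[of 2]
    proof eventually_elim
      case (elim n)
      have c0: "0 \<le> C n" using Cpos[of n] by (rule less_imp_le)
      have k0: "0 \<le> real n - 2" using elim(2) by simp
      show ?case unfolding elim(1)
        by (rule laplace_upper[where C="C n" and k="real n - 2" and K=K and h=h and E=D and c=v, OF th c0 k0 h up])
    qed
  qed
  fix \<epsilon> :: real assume e: "0 < \<epsilon>"
  obtain p1 U where U: "open U" "p1 \<in> U" "U \<subseteq> D" "isCont K p1" "isCont hc p1" "0 < hc p1"
    "K p1 \<le> v + \<epsilon> / 2" "\<forall>p\<in>U. h p = hc p" using low[OF e] by blast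
  obtain a1 a2 t1 t2 where B: "a1 < a2" "t1 < t2" "{a1..a2} \<times> {t1..t2} \<subseteq> U"
    "\<forall>p\<in>{a1..a2} \<times> {t1..t2}. K p \<le> K p1 + \<epsilon> / 2 \<and> hc p1 / 2 \<le> hc p"
    using box_near[OF U(1,2,4,5,6), of "\<epsilon>/2"] e by auto
  define \<kappa> where "\<kappa> = hc p1 / 2 * ((a2 - a1) * (t2 - t1))"
  have kap: "0 < \<kappa>" using B U by (simp add: \<kappa>_def)
  have "ereal (- (v + \<epsilon>)) \<le> liminf (\<lambda>n. eln (X n) / ereal (real n))"
  proof (rule liminf_lower[OF _ Cpos Clim kap])
    show "eventually (\<lambda>n. ennreal (C n * exp (- (real n - 2) * (v + \<epsilon>)) * \<kappa>) \<le> X n) sequentially"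
      using X eventually_ge_at_top[of 2]
    proof eventually_elim
      case (elim n)
      have "ennreal (C n * exp (- (real n - 2) * (v + \<epsilon>)) * (hc p1 / 2) * ((a2 - a1) * (t2 - t1))) \<le>
          (\<integral>\<^sup>+p. ennreal (C n * exp (- (real n - 2) * K p) * h p) * indicator D p \<partial>lborel)"
      proof (rule laplace_lower)
        show "{a1..a2} \<times> {t1..t2} \<subseteq> D" using B U by auto
        show "a1 \<le> a2" "t1 \<le> t2" using B by auto
        show "0 \<le> C n" using Cpos[of n] by (rule less_imp_le)
        show "0 \<le> real n - 2" using elim(2) by simp
        show "0 \<le> hc p1 / 2" using U(6) by simp
        fix p assume p: "p \<in> {a1..a2} \<times> {t1..t2}"
        then have "p \<in> U" using B by auto
        have k1: "K p \<le> K p1 + \<epsilon> / 2" and k2: "hc p1 / 2 \<le> hc p" using B(4) p by auto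
        have k3: "h p = hc p" using U(8) \<open>p \<in> U\<close> by auto
        show "K p \<le> v + \<epsilon> \<and> hc p1 / 2 \<le> h p" using k1 k2 k3 U(7) by simp
      qed
      then show ?case unfolding elim(1) \<kappa>_def by (simp add: mult.assoc)
    qed
  qed
  then show "ereal (- v - \<epsilon>) \<le> liminf (\<lambda>n. eln (X n) / ereal (real n))" by simp
qed


lemma lawMW_factor:
  assumes "0 < \<theta>" "3 \<le> n" "F \<in> sets borel"
  shows "emeasure (lawMW \<theta> n) F = (\<integral>\<^sup>+p. ennreal (Cn n * exp (- (real n - 2) * Kr \<theta> p) * h2 \<theta> p)
      * indicator {p. PsiN \<theta> n p \<in> F} p \<partial>lborel)"
proof -
  have "emeasure (lawMW \<theta> n) F = (\<integral>\<^sup>+p. ennreal (gd \<theta> n p) * indicator F (PsiN \<theta> n p) \<partial>lborel)"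
    using lawMW_emeasure[OF assms(1) _ assms(3)] assms(2) by simp
  also have "\<dots> = (\<integral>\<^sup>+p. ennreal (Cn n * exp (- (real n - 2) * Kr \<theta> p) * h2 \<theta> p)
      * indicator {p. PsiN \<theta> n p \<in> F} p \<partial>lborel)"
    by (intro nn_integral_cong) (simp add: gd_factor[OF assms(2,1)] indicator_def)
  finally show ?thesis .
qed

lemma h2_ne0: "h2 \<theta> p \<noteq> 0 \<Longrightarrow> 0 < fst p \<and> 0 \<le> snd p"
  by (auto simp: h2_def split: if_splits)

lemma PsiN_Psi:
  assumes "\<theta> < 1" "0 < n"
  shows "PsiN \<theta> n p = Psi \<theta> (fst p + (- ln \<theta> / (real n * (1 - \<theta>))), snd p - (- ln \<theta> / (real n * (1 - \<theta>))))"
proof -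
  let ?d = "- ln \<theta> / (real n * (1 - \<theta>))"
  have "(1 - \<theta>) * ?d = - ln \<theta> / real n" using assms by (simp add: field_simps)
  then have "(real n - 1) / real n * ln \<theta> + (1 - \<theta>) * fst p = ln \<theta> + (1 - \<theta>) * (fst p + ?d)"
    using assms by (simp add: field_simps)
  moreover have "fst p + snd p = fst p + ?d + (snd p - ?d)" by simp
  ultimately show ?thesis unfolding PsiN_def Psi_def by simp
qed

lemma ereal_bound:
  assumes "\<And>c. ereal c < I \<Longrightarrow> L \<le> ereal (- c)"
  shows "L \<le> - I"
proof (rule ccontr)
  assume "\<not> L \<le> - I"
  then have "- I < L" by simp
  then obtain z where z: "- I < ereal z" "ereal z < L" using ereal_dense2 by blast
  have "- ereal z < I" using z(1) ereal_uminus_less_reorder by blast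
  then have "L \<le> ereal (- (- z))" using assms[of "- z"] by simp
  then show False using z(2) by simp
qed

lemma ldp_upper:
  assumes th: "0 < \<theta>" "\<theta> < 1" and F: "closed F"
  shows "limsup (\<lambda>n. eln (emeasure (lawMW \<theta> n) F) / ereal (real n)) \<le> - (INF x\<in>F. JQ \<theta> x)"
proof (rule ereal_bound)
  fix c assume c: "ereal c < (INF x\<in>F. JQ \<theta> x)"
  define S where "S = {p. 0 < fst p \<and> 0 \<le> snd p \<and> Kr \<theta> p \<le> c}"
  define T where "T = Psi \<theta> -` F"
  have cS: "compact S" unfolding S_def by (rule compact_Kr_sub[OF th(1)])
  have cT: "closed T" unfolding T_def by (rule closed_vimage[OF F continuous_Psi])
  have dST: "S \<inter> T = {}"
  proof (rule ccontr)
    assume "S \<inter> T \<noteq> {}"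
    then obtain p where p: "p \<in> S" "p \<in> T" by blast
    then have "(INF x\<in>F. JQ \<theta> x) \<le> JQ \<theta> (Psi \<theta> p)" by (intro INF_lower) (simp add: T_def)
    also have "\<dots> = ereal (Kr \<theta> p)" using p(1) JQ_Psi[OF th] by (simp add: S_def)
    also have "\<dots> \<le> ereal c" using p(1) by (simp add: S_def)
    finally show False using c by simp
  qed
  obtain d where d: "0 < d" "\<And>x y. x \<in> S \<Longrightarrow> y \<in> T \<Longrightarrow> d \<le> dist x y"
    using separate_compact_closed[OF cS cT dST] by blast
  define \<delta> where "\<delta> n = - ln \<theta> / (real n * (1 - \<theta>))" for n :: nat
  have "((\<lambda>n. \<bar>ln \<theta>\<bar> / (1 - \<theta>) / real n) \<longlongrightarrow> 0) sequentially"
    by (intro tendsto_divide_0[OF tendsto_const] filterlim_at_top_imp_at_infinity filterlim_real_sequentially)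
  then have evd: "eventually (\<lambda>n. \<bar>ln \<theta>\<bar> / (1 - \<theta>) / real n < d / 2) sequentially"
    using d(1) by (intro order_tendstoD(2)) auto
  show "limsup (\<lambda>n. eln (emeasure (lawMW \<theta> n) F) / ereal (real n)) \<le> ereal (- c)"
  proof (rule limsup_upper[OF _ Cn_pos_all lnCn_lim])
    show "eventually (\<lambda>n. emeasure (lawMW \<theta> n) F \<le> ennreal (Cn n * exp (- (real n - 2) * c))) sequentially"
      using evd eventually_ge_at_top[of 3]
    proof eventually_elim
      case (elim n)
      have n0: "0 < n" using elim by simp
      have ad: "\<bar>\<delta> n\<bar> < d / 2"
        using elim(1) th n0 by (simp add: \<delta>_def abs_divide abs_mult field_simps)
      have key: "c \<le> Kr \<theta> p" if p: "p \<in> {p. PsiN \<theta> n p \<in> F}" "h2 \<theta> p \<noteq> 0" for p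
      proof (rule ccontr)
        assume "\<not> c \<le> Kr \<theta> p"
        then have pS: "p \<in> S" using h2_ne0[OF p(2)] by (simp add: S_def)
        define p' where "p' = (fst p + \<delta> n, snd p - \<delta> n)"
        have pT: "p' \<in> T" using p(1) PsiN_Psi[OF th(2) n0, of p] by (simp add: T_def p'_def \<delta>_def)
        have "dist p p' = sqrt ((\<delta> n)\<^sup>2 + (\<delta> n)\<^sup>2)"
          by (cases p) (simp add: p'_def dist_Pair_Pair dist_real_def)
        also have "\<dots> \<le> \<bar>\<delta> n\<bar> + \<bar>\<delta> n\<bar>" by (rule sqrt_sum_squares_le_sum_abs)
        also have "\<dots> < d" using ad by simp
        finally show False using d(2)[OF pS pT] by simp
      qed
      show ?case unfolding lawMW_factor[OF th(1) elim(2) borel_closed[OF F]]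
      proof (rule laplace_upper[where C="Cn n" and k="real n - 2" and K="Kr \<theta>" and h="h2 \<theta>" and c=c, OF th(1)])
        show "0 \<le> Cn n" using Cn_pos_all[of n] by (rule less_imp_le)
        show "0 \<le> real n - 2" using elim(2) by simp
        show "\<And>p. 0 \<le> h2 \<theta> p" using h2_nonneg[OF th(1)] .
        show "\<And>p. h2 \<theta> p \<le> h2 \<theta> p" by simp
        show "\<And>p. p \<in> {p. PsiN \<theta> n p \<in> F} \<Longrightarrow> h2 \<theta> p \<noteq> 0 \<Longrightarrow> c \<le> Kr \<theta> p" using key by blast
      qed
    qed
  qed
qed


definition hc2 :: "real \<Rightarrow> real \<times> real \<Rightarrow> real" where
  "hc2 \<theta> p = 4 * \<theta> * exp (- 2 * \<theta> * fst p - 2 * snd p)"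

lemma hc2_cont: "isCont (hc2 \<theta>) p"
  unfolding hc2_def by (intro continuous_intros)

lemma hc2_pos: "0 < \<theta> \<Longrightarrow> 0 < hc2 \<theta> p"
  by (simp add: hc2_def)

lemma h2_hc2: "0 < fst p \<Longrightarrow> 0 < snd p \<Longrightarrow> h2 \<theta> p = hc2 \<theta> p"
  by (simp add: h2_def hc2_def)

lemma Kr_cont: assumes "0 < \<theta>" "0 < fst p" shows "isCont (Kr \<theta>) p"
proof -
  have "isCont (\<lambda>p. \<theta> * fst p - 1 - ln (\<theta> * fst p) + snd p) p"
    using assms by (intro continuous_intros) auto
  then show ?thesis by (simp add: Kr_def[abs_def])
qed

lemma open_quad: "open {p :: real \<times> real. 0 < fst p \<and> 0 < snd p}"
proof -
  have "{p :: real \<times> real. 0 < fst p \<and> 0 < snd p} = fst -` {0<..} \<inter> snd -` {0<..}" by auto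
  then show ?thesis by (simp add: open_Int open_vimage_fst open_vimage_snd)
qed

lemma ldp_lower:
  assumes th: "0 < \<theta>" "\<theta> < 1" and G: "open G"
  shows "- (INF x\<in>G. JQ \<theta> x) \<le> liminf (\<lambda>n. eln (emeasure (lawMW \<theta> n) G) / ereal (real n))"
proof -
  let ?Y = "liminf (\<lambda>n. eln (emeasure (lawMW \<theta> n) G) / ereal (real n))"
  have each: "- JQ \<theta> q \<le> ?Y" if q: "q \<in> G" for q
  proof (cases "JQ \<theta> q = \<infinity>")
    case True then show ?thesis by simp
  next
    case False
    then obtain p0 where p0: "0 < fst p0" "0 \<le> snd p0" "q = Psi \<theta> p0" using JQ_finite_Psi[OF th] by blast
    have Jq: "JQ \<theta> q = ereal (Kr \<theta> p0)" using JQ_Psi[OF th p0(1,2)] p0(3) by simp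
    have "ereal (- Kr \<theta> p0) \<le> ?Y"
    proof (rule ereal_le_epsilon2)
      fix e :: real assume e: "0 < e"
      obtain \<rho> where \<rho>: "0 < \<rho>" "ball q \<rho> \<subseteq> G" using G q openE by blast
      define \<eta> where "\<eta> = min (e / 2) (\<rho> / 4)"
      have \<eta>: "0 < \<eta>" "\<eta> \<le> e / 2" "\<eta> < \<rho> / 2" using e \<rho> by (auto simp: \<eta>_def)
      define p1 where "p1 = (fst p0, snd p0 + \<eta>)"
      define U where "U = Psi \<theta> -` ball q (\<rho> / 2) \<inter> {p. 0 < fst p \<and> 0 < snd p}"
      have oU: "open U" unfolding U_def
        by (intro open_Int open_quad open_vimage[OF open_ball continuous_Psi])
      have Pp1: "Psi \<theta> p1 = (fst q + \<eta>, snd q)" using p0(3) by (simp add: Psi_def p1_def)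
      have "dist (Psi \<theta> p1) q = \<eta>" unfolding Pp1 using \<eta>(1) by (cases q) (simp add: dist_Pair_Pair dist_real_def)
      then have p1U: "p1 \<in> U" using \<eta> p0 by (simp add: U_def p1_def dist_commute)
      have Kp1: "Kr \<theta> p1 = Kr \<theta> p0 + \<eta>" by (simp add: Kr_def p1_def)
      obtain a1 a2 t1 t2 where B: "a1 < a2" "t1 < t2" "{a1..a2} \<times> {t1..t2} \<subseteq> U"
        "\<forall>p\<in>{a1..a2} \<times> {t1..t2}. Kr \<theta> p \<le> Kr \<theta> p1 + e / 2 \<and> hc2 \<theta> p1 / 2 \<le> hc2 \<theta> p"
        using box_near[OF oU p1U Kr_cont[OF th(1)] hc2_cont hc2_pos[OF th(1)], of "e / 2"] p0(1) e
        by (auto simp: p1_def)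
      define \<kappa> where "\<kappa> = hc2 \<theta> p1 / 2 * ((a2 - a1) * (t2 - t1))"
      have kap: "0 < \<kappa>" using B hc2_pos[OF th(1)] by (simp add: \<kappa>_def)
      have "((\<lambda>n. \<bar>ln \<theta>\<bar> / real n) \<longlongrightarrow> 0) sequentially"
        by (intro tendsto_divide_0[OF tendsto_const] filterlim_at_top_imp_at_infinity filterlim_real_sequentially)
      then have evd: "eventually (\<lambda>n. \<bar>ln \<theta>\<bar> / real n < \<rho> / 2) sequentially"
        using \<rho>(1) by (intro order_tendstoD(2)) auto
      have "ereal (- (Kr \<theta> p1 + e / 2)) \<le> ?Y"
      proof (rule liminf_lower[OF _ Cn_pos_all lnCn_lim kap])
        show "eventually (\<lambda>n. ennreal (Cn n * exp (- (real n - 2) * (Kr \<theta> p1 + e / 2)) * \<kappa>) \<le> emeasure (lawMW \<theta> n) G) sequentially"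
          using evd eventually_ge_at_top[of 3]
        proof eventually_elim
          case (elim n)
          have boxE: "{a1..a2} \<times> {t1..t2} \<subseteq> {p. PsiN \<theta> n p \<in> G}"
          proof
            fix p assume "p \<in> {a1..a2} \<times> {t1..t2}"
            then have "p \<in> U" using B by auto
            then have d1: "dist (Psi \<theta> p) q < \<rho> / 2" by (simp add: U_def dist_commute)
            have "PsiN \<theta> n p = (fst (Psi \<theta> p), snd (Psi \<theta> p) - ln \<theta> / real n)"
              using elim(2) by (simp add: PsiN_def Psi_def field_simps)
            then have "dist (PsiN \<theta> n p) (Psi \<theta> p) = \<bar>ln \<theta>\<bar> / real n"
              by (simp add: dist_prod_def dist_real_def abs_divide)
            then have "dist (PsiN \<theta> n p) q < \<rho>" using d1 elim(1) dist_triangle[of "PsiN \<theta> n p" q "Psi \<theta> p"] by linarith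
            then show "p \<in> {p. PsiN \<theta> n p \<in> G}" using \<rho>(2) by (auto simp: dist_commute)
          qed
          have "ennreal (Cn n * exp (- (real n - 2) * (Kr \<theta> p1 + e / 2)) * (hc2 \<theta> p1 / 2) * ((a2 - a1) * (t2 - t1))) \<le>
              (\<integral>\<^sup>+p. ennreal (Cn n * exp (- (real n - 2) * Kr \<theta> p) * h2 \<theta> p) * indicator {p. PsiN \<theta> n p \<in> G} p \<partial>lborel)"
          proof (rule laplace_lower[OF boxE])
            show "a1 \<le> a2" "t1 \<le> t2" using B by auto
            show "0 \<le> Cn n" using Cn_pos_all[of n] by (rule less_imp_le)
            show "0 \<le> real n - 2" using elim(2) by simp
            show "0 \<le> hc2 \<theta> p1 / 2" using hc2_pos[OF th(1), of p1] by simp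
            fix p assume p: "p \<in> {a1..a2} \<times> {t1..t2}"
            then have pU: "p \<in> U" using B by auto
            have k1: "Kr \<theta> p \<le> Kr \<theta> p1 + e / 2" and k2: "hc2 \<theta> p1 / 2 \<le> hc2 \<theta> p" using B(4) p by auto
            have k3: "h2 \<theta> p = hc2 \<theta> p" using pU by (intro h2_hc2) (auto simp: U_def)
            show "Kr \<theta> p \<le> Kr \<theta> p1 + e / 2 \<and> hc2 \<theta> p1 / 2 \<le> h2 \<theta> p" using k1 k2 k3 by simp
          qed
          then show ?case unfolding lawMW_factor[OF th(1) elim(2) borel_open[OF G]] \<kappa>_def by (simp add: mult.assoc)
        qed
      qed
      moreover have "ereal (- Kr \<theta> p0 - e) \<le> ereal (- (Kr \<theta> p1 + e / 2))" using Kp1 \<eta> by simp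
      ultimately have "ereal (- Kr \<theta> p0 - e) \<le> ?Y" by (rule order_trans[rotated])
      then have "ereal (- Kr \<theta> p0 - e) + ereal e \<le> ?Y + ereal e" by (rule add_right_mono)
      then show "ereal (- Kr \<theta> p0) \<le> ?Y + ereal e" by simp
    qed
    then show ?thesis using Jq by simp
  qed
  have "- ?Y \<le> (INF x\<in>G. JQ \<theta> x)"
  proof (rule INF_greatest)
    fix q assume "q \<in> G"
    then show "- ?Y \<le> JQ \<theta> q" using each ereal_uminus_le_reorder by blast
  qed
  then show ?thesis using ereal_uminus_le_reorder by blast
qed


lemma open_D: "open {p :: real \<times> real. b < fst p + snd p \<and> 0 < fst p \<and> 0 < snd p}"
proof -
  have "{p :: real \<times> real. b < fst p + snd p \<and> 0 < fst p \<and> 0 < snd p} =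
     (\<lambda>p. fst p + snd p) -` {b<..} \<inter> {p. 0 < fst p \<and> 0 < snd p}" by auto
  moreover have "open ((\<lambda>p::real\<times>real. fst p + snd p) -` {b<..})"
    by (intro open_vimage) (auto intro!: continuous_intros)
  ultimately show ?thesis using open_quad by (simp add: open_Int)
qed

lemma s_lim:
  assumes b: "1 < b"
  shows "((\<lambda>n. - eln (emeasure (Pn n) {x \<in> space (Pn n). Mn n x \<in> {b..}}) / ereal (real n)) \<longlongrightarrow> ereal (sval b)) sequentially"
proof (rule laplace_lim[where \<theta>=1 and C=Cn and K="Kr 1" and h="h2 1" and hc="hc2 1" and D="{p. b \<le> fst p + snd p}"])
  show "(0::real) < 1" by simp
  show "\<And>n. 0 < Cn n" by (rule Cn_pos_all)
  show "((\<lambda>n. ln (Cn n) / real n) \<longlongrightarrow> 0) sequentially" by (rule lnCn_lim)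
  show "\<And>p. 0 \<le> h2 1 p" by (rule h2_nonneg) simp
  show "\<And>p. h2 1 p \<le> h2 1 p" by simp
  show "\<And>p. p \<in> {p. b \<le> fst p + snd p} \<Longrightarrow> h2 1 p \<noteq> 0 \<Longrightarrow> sval b \<le> Kr 1 p"
  proof -
    fix p :: "real \<times> real" assume "p \<in> {p. b \<le> fst p + snd p}" "h2 1 p \<noteq> 0"
    then show "sval b \<le> Kr 1 p" using sval_le[OF b, of "fst p" "snd p"] h2_ne0 by auto
  qed
  fix \<epsilon> :: real assume e: "0 < \<epsilon>"
  let ?p1 = "(b, \<epsilon> / 2)"
  let ?U = "{p :: real \<times> real. b < fst p + snd p \<and> 0 < fst p \<and> 0 < snd p}"
  show "\<exists>p1 U. open U \<and> p1 \<in> U \<and> U \<subseteq> {p. b \<le> fst p + snd p} \<and> isCont (Kr 1) p1 \<and> isCont (hc2 1) p1 \<and>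
        0 < hc2 1 p1 \<and> Kr 1 p1 \<le> sval b + \<epsilon> / 2 \<and> (\<forall>p\<in>U. h2 1 p = hc2 1 p)"
  proof (intro exI conjI ballI)
    show "open ?U" by (rule open_D)
    show "?p1 \<in> ?U" using b e by auto
    show "?U \<subseteq> {p. b \<le> fst p + snd p}" by auto
    show "isCont (Kr 1) ?p1" using b by (intro Kr_cont) auto
    show "isCont (hc2 1) ?p1" by (rule hc2_cont)
    show "0 < hc2 1 ?p1" by (rule hc2_pos) simp
    show "Kr 1 ?p1 \<le> sval b + \<epsilon> / 2" using sval_pt[OF b] by (simp add: Kr_def)
    fix p assume "p \<in> ?U"
    then show "h2 1 p = hc2 1 p" by (intro h2_hc2) auto
  qed
next
  show "eventually (\<lambda>n. emeasure (Pn n) {x \<in> space (Pn n). Mn n x \<in> {b..}} =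
     (\<integral>\<^sup>+p. ennreal (Cn n * exp (- (real n - 2) * Kr 1 p) * h2 1 p) * indicator {p. b \<le> fst p + snd p} p \<partial>lborel)) sequentially"
    using eventually_ge_at_top[of 3]
  proof eventually_elim
    case (elim n)
    have "emeasure (Pn n) {x \<in> space (Pn n). Mn n x \<in> {b..}} =
      (\<integral>\<^sup>+p. ennreal (gd 1 n p) * indicator {p. b \<le> fst p + snd p} p \<partial>lborel)"
      by (rule Pn_int) (use elim in simp)
    also have "\<dots> = (\<integral>\<^sup>+p. ennreal (Cn n * exp (- (real n - 2) * Kr 1 p) * h2 1 p) * indicator {p. b \<le> fst p + snd p} p \<partial>lborel)"
      using gd_factor[OF elim, of 1] by simp
    finally show ?case .
  qed
qed


definition h3 :: "real \<Rightarrow> real \<times> real \<Rightarrow> real" where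
  "h3 \<theta> p = h2 \<theta> p * exp (- 4 * (1 - \<theta>) * fst p)"

definition hc3 :: "real \<Rightarrow> real \<times> real \<Rightarrow> real" where
  "hc3 \<theta> p = hc2 \<theta> p * exp (- 4 * (1 - \<theta>) * fst p)"

lemma gdE:
  assumes n: "3 \<le> n" and th: "0 < \<theta>"
  shows "gd \<theta> n p * (exp (- (1 - \<theta>) * (real n * fst p)) / \<theta> ^ (n - 1))\<^sup>2 =
     Cn n / \<theta>\<^sup>2 * exp (- (real n - 2) * K2 \<theta> p) * h3 \<theta> p"
proof -
  define k where "k = n - 2"
  have nk: "real n - 2 = real k" "n - 1 = k + 1" "real n = real k + 2" using n by (auto simp: k_def)
  let ?a = "fst p"
  have pk0: "exp (real m * ln \<theta>) = \<theta> ^ m" for m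
  proof -
    have "exp (real m * ln \<theta>) = exp (ln \<theta>) ^ m" by (rule exp_of_nat_mult)
    then show ?thesis using th by simp
  qed
  have pk: "exp (2 * real k * ln \<theta>) = \<theta> ^ (2 * k)" using pk0[of "2 * k"] by simp
  have e1: "exp (- (real n - 2) * K2 \<theta> p) = exp (- (real n - 2) * Kr \<theta> p) * exp (- 2 * real k * (1 - \<theta>) * ?a) / \<theta> ^ (2 * k)"
  proof -
    have "- (real n - 2) * K2 \<theta> p = - (real n - 2) * Kr \<theta> p + (- 2 * real k * (1 - \<theta>) * ?a) - 2 * real k * ln \<theta>"
      unfolding K2_def nk by (simp add: algebra_simps)
    then have "exp (- (real n - 2) * K2 \<theta> p) = exp (- (real n - 2) * Kr \<theta> p) * exp (- 2 * real k * (1 - \<theta>) * ?a) / exp (2 * real k * ln \<theta>)"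
      by (simp only: exp_add exp_diff)
    then show ?thesis unfolding pk .
  qed
  have e2: "(exp (- (1 - \<theta>) * (real n * ?a)) / \<theta> ^ (n - 1))\<^sup>2 =
      exp (- 2 * real k * (1 - \<theta>) * ?a) * exp (- 4 * (1 - \<theta>) * ?a) / \<theta> ^ (2 * k) / \<theta>\<^sup>2"
  proof -
    have "(exp (- (1 - \<theta>) * (real n * ?a)))\<^sup>2 = exp (- 2 * real k * (1 - \<theta>) * ?a) * exp (- 4 * (1 - \<theta>) * ?a)"
      unfolding power2_eq_square exp_add[symmetric] nk by (simp add: algebra_simps)
    moreover have "(\<theta> ^ (n - 1))\<^sup>2 = \<theta> ^ (2 * k) * \<theta>\<^sup>2"
      unfolding nk by (simp add: power_mult_distrib power_add[symmetric] power_mult[symmetric] algebra_simps)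
    ultimately show ?thesis by (simp add: power_divide)
  qed
  show ?thesis
    unfolding gd_factor[OF n th] e1 e2 h3_def by (simp add: field_simps)
qed


lemma hc3_cont: "isCont (hc3 \<theta>) p"
  unfolding hc3_def hc2_def by (intro continuous_intros)

lemma K2_cont: assumes "0 < \<theta>" "0 < fst p" shows "isCont (K2 \<theta>) p"
proof -
  have "isCont (\<lambda>p. Kr \<theta> p + 2 * (1 - \<theta>) * fst p + 2 * ln \<theta>) p"
    using Kr_cont[OF assms] by (intro continuous_intros) auto
  then show ?thesis by (simp add: K2_def[abs_def])
qed

lemma r_lim:
  assumes th: "0 < \<theta>" "\<theta> < 1" and b: "1 < b"
  shows "((\<lambda>n. - eln (\<integral>\<^sup>+ x. (Ln \<theta> n x)\<^sup>2 * indicator {x. Mn n x \<in> {b..}} x \<partial>Qn \<theta> n) / ereal (real n))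
     \<longlongrightarrow> ereal (rval \<theta> b)) sequentially"
proof (rule laplace_lim[where \<theta>=\<theta> and C="\<lambda>n. Cn n / \<theta>\<^sup>2" and K="K2 \<theta>" and h="h3 \<theta>" and hc="hc3 \<theta>" and D="{p. b \<le> fst p + snd p}"])
  show "0 < \<theta>" by (rule th)
  show "\<And>n. 0 < Cn n / \<theta>\<^sup>2" using Cn_pos_all th by simp
  show "((\<lambda>n. ln (Cn n / \<theta>\<^sup>2) / real n) \<longlongrightarrow> 0) sequentially"
  proof -
    have "((\<lambda>n. ln (Cn n) / real n - ln (\<theta>\<^sup>2) / real n) \<longlongrightarrow> 0 - 0) sequentially"
      by (intro tendsto_diff lnCn_lim tendsto_divide_0[OF tendsto_const] filterlim_at_top_imp_at_infinity filterlim_real_sequentially)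
    moreover have "ln (Cn n / \<theta>\<^sup>2) / real n = ln (Cn n) / real n - ln (\<theta>\<^sup>2) / real n" for n
      using Cn_pos_all[of n] th by (simp add: ln_div diff_divide_distrib)
    ultimately show ?thesis by simp
  qed
  show "\<And>p. 0 \<le> h3 \<theta> p" using h2_nonneg[OF th(1)] by (simp add: h3_def)
  show "\<And>p. h3 \<theta> p \<le> h2 \<theta> p"
  proof -
    fix p :: "real \<times> real"
    show "h3 \<theta> p \<le> h2 \<theta> p"
    proof (cases "h2 \<theta> p = 0")
      case True then show ?thesis by (simp add: h3_def)
    next
      case False
      then have "0 < fst p" using h2_ne0 by blast
      then have "0 \<le> (4 * (1 - \<theta>)) * fst p" using th by simp
      then have "exp (- ((4 * (1 - \<theta>)) * fst p)) \<le> 1" by (simp only: exp_le_one_iff neg_le_0_iff_le)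
      moreover have "- 4 * (1 - \<theta>) * fst p = - ((4 * (1 - \<theta>)) * fst p)" by (simp add: algebra_simps)
      ultimately have "exp (- 4 * (1 - \<theta>) * fst p) \<le> 1" by simp
      then show ?thesis unfolding h3_def using h2_nonneg[OF th(1), of p] by (simp add: mult_left_le)
    qed
  qed
  show "\<And>p. p \<in> {p. b \<le> fst p + snd p} \<Longrightarrow> h3 \<theta> p \<noteq> 0 \<Longrightarrow> rval \<theta> b \<le> K2 \<theta> p"
  proof -
    fix p :: "real \<times> real" assume "p \<in> {p. b \<le> fst p + snd p}" "h3 \<theta> p \<noteq> 0"
    then have "h2 \<theta> p \<noteq> 0" "b \<le> fst p + snd p" by (auto simp: h3_def)
    then show "rval \<theta> b \<le> K2 \<theta> p" using rval_le[OF th b, of "fst p" "snd p"] h2_ne0 by auto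
  qed
  fix \<epsilon> :: real assume e: "0 < \<epsilon>"
  obtain a t where at: "0 < a" "0 \<le> t" "b \<le> a + t" "K2 \<theta> (a, t) = rval \<theta> b" using rval_pt[OF th b] by blast
  let ?p1 = "(a, t + \<epsilon> / 2)"
  let ?U = "{p :: real \<times> real. b < fst p + snd p \<and> 0 < fst p \<and> 0 < snd p}"
  show "\<exists>p1 U. open U \<and> p1 \<in> U \<and> U \<subseteq> {p. b \<le> fst p + snd p} \<and> isCont (K2 \<theta>) p1 \<and> isCont (hc3 \<theta>) p1 \<and>
        0 < hc3 \<theta> p1 \<and> K2 \<theta> p1 \<le> rval \<theta> b + \<epsilon> / 2 \<and> (\<forall>p\<in>U. h3 \<theta> p = hc3 \<theta> p)"
  proof (intro exI conjI ballI)
    show "open ?U" by (rule open_D)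
    show "?p1 \<in> ?U" using at e by auto
    show "?U \<subseteq> {p. b \<le> fst p + snd p}" by auto
    show "isCont (K2 \<theta>) ?p1" using at th by (intro K2_cont) auto
    show "isCont (hc3 \<theta>) ?p1" by (rule hc3_cont)
    show "0 < hc3 \<theta> ?p1" using hc2_pos[OF th(1)] by (simp add: hc3_def)
    have "K2 \<theta> ?p1 = K2 \<theta> (a, t) + \<epsilon> / 2" by (simp add: K2_def Kr_def)
    then show "K2 \<theta> ?p1 \<le> rval \<theta> b + \<epsilon> / 2" using at by simp
    fix p assume "p \<in> ?U"
    then show "h3 \<theta> p = hc3 \<theta> p" by (simp add: h3_def hc3_def h2_hc2)
  qed
next
  show "eventually (\<lambda>n. (\<integral>\<^sup>+ x. (Ln \<theta> n x)\<^sup>2 * indicator {x. Mn n x \<in> {b..}} x \<partial>Qn \<theta> n) =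
     (\<integral>\<^sup>+p. ennreal (Cn n / \<theta>\<^sup>2 * exp (- (real n - 2) * K2 \<theta> p) * h3 \<theta> p) * indicator {p. b \<le> fst p + snd p} p \<partial>lborel)) sequentially"
    using eventually_ge_at_top[of 3]
  proof eventually_elim
    case (elim n)
    have "(\<integral>\<^sup>+ x. (Ln \<theta> n x)\<^sup>2 * indicator {x. Mn n x \<in> {b..}} x \<partial>Qn \<theta> n) =
      (\<integral>\<^sup>+p. ennreal (gd \<theta> n p) * (ennreal ((exp (- (1 - \<theta>) * (real n * fst p)) / \<theta> ^ (n - 1))\<^sup>2)
        * indicator {p. b \<le> fst p + snd p} p) \<partial>lborel)"
      by (rule eff_int[OF th(1)]) (use elim in simp)
    also have "\<dots> = (\<integral>\<^sup>+p. ennreal (Cn n / \<theta>\<^sup>2 * exp (- (real n - 2) * K2 \<theta> p) * h3 \<theta> p) * indicator {p. b \<le> fst p + snd p} p \<partial>lborel)"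
    proof (intro nn_integral_cong)
      fix p :: "real \<times> real"
      have g0: "0 \<le> gd \<theta> n p" using th by (simp add: gd_def)
      have "ennreal (gd \<theta> n p) * ennreal ((exp (- (1 - \<theta>) * (real n * fst p)) / \<theta> ^ (n - 1))\<^sup>2) =
          ennreal (gd \<theta> n p * (exp (- (1 - \<theta>) * (real n * fst p)) / \<theta> ^ (n - 1))\<^sup>2)"
        using g0 by (simp add: ennreal_mult)
      also have "\<dots> = ennreal (Cn n / \<theta>\<^sup>2 * exp (- (real n - 2) * K2 \<theta> p) * h3 \<theta> p)"
        using gdE[OF elim th(1)] by simp
      finally show "ennreal (gd \<theta> n p) * (ennreal ((exp (- (1 - \<theta>) * (real n * fst p)) / \<theta> ^ (n - 1))\<^sup>2)
        * indicator {p. b \<le> fst p + snd p} p) = ennreal (Cn n / \<theta>\<^sup>2 * exp (- (real n - 2) * K2 \<theta> p) * h3 \<theta> p) * indicator {p. b \<le> fst p + snd p} p"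
        by (simp add: mult.assoc[symmetric])
    qed
    finally show ?case .
  qed
qed

theorem mainTheorem6:
  fixes b \<theta> :: real
  assumes "b > 1" and "0 < \<theta>" and "\<theta> < 1"
  shows "LDP (lawMW \<theta>) (JQ \<theta>)
    \<and> (\<forall>m w. JQ \<theta> (m, w) = 0 \<longleftrightarrow> (m, w) = (1 / \<theta>, (1 - \<theta>) / \<theta> + ln \<theta>))
    \<and> (asymp_efficient \<theta> b \<longleftrightarrow> (\<theta> = 1 / b \<and> b \<le> 2))
    \<and> (\<theta> = 1 / b \<longrightarrow>
         ((\<lambda>w. real_of_ereal (IQB \<theta> b w)) has_real_derivative (- 1 - 1 / (b - 1)))
           (at ((1 - \<theta>) / \<theta> + ln \<theta>) within {..(1 - \<theta>) / \<theta> + ln \<theta>}))"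
proof (intro conjI allI impI)
  show "LDP (lawMW \<theta>) (JQ \<theta>)"
    unfolding LDP_def using good_JQ[OF assms(2,3)] ldp_upper[OF assms(2,3)] ldp_lower[OF assms(2,3)] by blast
  fix m w show "JQ \<theta> (m, w) = 0 \<longleftrightarrow> (m, w) = (1 / \<theta>, (1 - \<theta>) / \<theta> + ln \<theta>)"
    by (rule JQ_zero[OF assms(2,3)])
next
  have R: "((\<lambda>n. - eln (\<integral>\<^sup>+ x. (Ln \<theta> n x)\<^sup>2 * indicator {x. Mn n x \<in> {b..}} x \<partial>Qn \<theta> n) / ereal (real n))
     \<longlongrightarrow> ereal (rval \<theta> b)) sequentially" by (rule r_lim[OF assms(2,3,1)])
  have S: "((\<lambda>n. - eln (emeasure (Pn n) {x \<in> space (Pn n). Mn n x \<in> {b..}}) / ereal (real n)) \<longlongrightarrow> ereal (sval b)) sequentially"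
    by (rule s_lim[OF assms(1)])
  have "asymp_efficient \<theta> b \<longleftrightarrow> rval \<theta> b = 2 * sval b"
  proof
    assume "asymp_efficient \<theta> b"
    then obtain r s where rs: "((\<lambda>n. - eln (\<integral>\<^sup>+ x. (Ln \<theta> n x)\<^sup>2 * indicator {x. Mn n x \<in> {b..}} x \<partial>Qn \<theta> n) / ereal (real n)) \<longlongrightarrow> r) sequentially"
      "((\<lambda>n. - eln (emeasure (Pn n) {x \<in> space (Pn n). Mn n x \<in> {b..}}) / ereal (real n)) \<longlongrightarrow> s) sequentially"
      "r = 2 * s" unfolding asymp_efficient_def by blast
    have "r = ereal (rval \<theta> b)" using tendsto_unique[OF _ rs(1) R] by simp
    moreover have "s = ereal (sval b)" using tendsto_unique[OF _ rs(2) S] by simp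
    ultimately show "rval \<theta> b = 2 * sval b" using rs(3) by simp
  next
    assume "rval \<theta> b = 2 * sval b"
    then show "asymp_efficient \<theta> b" unfolding asymp_efficient_def
      using R S by (intro exI[of _ "ereal (rval \<theta> b)"] exI[of _ "ereal (sval b)"]) simp
  qed
  then show "asymp_efficient \<theta> b \<longleftrightarrow> (\<theta> = 1 / b \<and> b \<le> 2)"
    using rs_iff[OF assms(2,3,1)] by simp
next
  assume "\<theta> = 1 / b"
  then show "((\<lambda>w. real_of_ereal (IQB \<theta> b w)) has_real_derivative (- 1 - 1 / (b - 1)))
           (at ((1 - \<theta>) / \<theta> + ln \<theta>) within {..(1 - \<theta>) / \<theta> + ln \<theta>})"
    by (rule IQB_deriv[OF assms(1)])
qed


end
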